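(* With notation as in the context, let $s\in\{3,4,5,6,7\}$ and $s'=s+1$, and define $\psi_s(J)=\alpha_{s'}+\sum_{\beta\in J}\alpha_{h_s(\beta)}$ for $J\in\mathcal{J}(\Delta_s^+)$. Then $\psi_s$ is an isomorphism of posets from $\mathcal{J}(\Delta_s^+)$ (ordered by inclusion) onto $\Delta_{s'}^+$ when $s\le6$, and onto $\Delta_8^+\setminus\{\theta\}$ when $s=7$, where $\theta$ is the highest root of $E_8$. Moreover it is canonical: if $h:\Delta_s^+\to\{1,\dots,s\}$ is any function for which $J\mapsto\alpha_{s'}+\sum_{\beta\in J}\alpha_{h(\beta)}$ is a poset isomorphism onto the same target, then $h=h_s$.
   Context: Let $\Delta(E_8)$ be the root system of type $E_8$ with simple roots $\alpha_1,\dots,\alpha_8$, where $\langle\alpha_i,\alpha_i\rangle=2$, $\langle\alpha_i,\alpha_j\rangle=-1$ if $\{i,j\}\in\{\{1,3\},\{3,4\},\{4,5\},\{5,6\},\{6,7\},\{7,8\},\{2,4\}\}$, and $0$ otherwise; $\Delta^+$ denotes its positive roots, with $\beta=\sum\beta^i\alpha_i$, partially ordered by $\beta\le\beta'$ iff $\beta'-\beta$ is a nonnegative integer combination of simple roots. For $\beta\in\Delta^+$ let $m(\beta)=\max\{i:\beta^i\ne0\}$, and define the strata $\Delta_1^+=\{\alpha_1\}$, $\Delta_3^+=\{\beta: m(\beta)\in\{2,3\}\}$, $\Delta_s^+=\{\beta: m(\beta)=s\}$ for $4\le s\le 8$, each with the induced order. An order ideal of a poset $Y$ is a subset $J$ such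 that $x\in J$, $y\le x$ imply $y\in J$; $\mathcal{J}(Y)$ is the set of order ideals (including $\emptyset$). For $3\le s\le 8$, $\mathsf{Dyn}(E_s)$ is the graph on $v_1,\dots,v_s$ with $v_i\sim v_j$ iff $\langle\alpha_i,\alpha_j\rangle=-1$; $\mathsf{H}_s$ is the graph on $\Delta_s^+$ with $\beta\sim\beta'$ iff $\pm(\beta-\beta')$ is a simple root. An open map of graphs is a graph homomorphism that maps the neighbours of each vertex onto the neighbours of its image. For $3\le s\le7$ there is a unique function $h_s:\Delta_s^+\to\{1,\dots,s\}$ with $h_s(\alpha_s)=s$ such that $\beta\mapsto v_{h_s(\beta)}$ is an open map $\mathsf{H}_s\to\mathsf{Dyn}(E_s)$; this is the $h_s$ used in the claim. *)

theory Defs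
  imports Main "HOL-Library.FuncSet"
begin

text \<open>Vectors in the root lattice of E8 are coefficient functions nat => int with
  respect to the simple roots alpha_1..alpha_8 (indices outside 1..8 are 0).\<close>

definition E8_edges :: "(nat \<times> nat) set" where
  "E8_edges = {(1,3),(3,4),(4,5),(5,6),(6,7),(7,8),(2,4)}"

definition gram :: "nat \<Rightarrow> nat \<Rightarrow> int" where
  "gram i j = (if i = j then 2
               else if (i,j) \<in> E8_edges \<or> (j,i) \<in> E8_edges then -1 else 0)"

definition form :: "(nat \<Rightarrow> int) \<Rightarrow> (nat \<Rightarrow> int) \<Rightarrow> int" where
  "form b c = (\<Sum>i\<in>{1..8}. \<Sum>j\<in>{1..8}. b i * c j * gram i j)"

definition simple :: "nat \<Rightarrow> nat \<Rightarrow> int" where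
  "simple i = (\<lambda>k. if k = i then 1 else 0)"

definition refl :: "nat \<Rightarrow> (nat \<Rightarrow> int) \<Rightarrow> (nat \<Rightarrow> int)" where
  "refl i b = (\<lambda>k. b k - form (simple i) b * simple i k)"

inductive_set roots :: "(nat \<Rightarrow> int) set" where
  simple_root: "i \<in> {1..8} \<Longrightarrow> simple i \<in> roots"
| refl_root: "b \<in> roots \<Longrightarrow> i \<in> {1..8} \<Longrightarrow> refl i b \<in> roots"

definition pos_roots :: "(nat \<Rightarrow> int) set" where
  "pos_roots = {b \<in> roots. \<forall>k. 0 \<le> b k}"

definition rle :: "(nat \<Rightarrow> int) \<Rightarrow> (nat \<Rightarrow> int) \<Rightarrow> bool" where
  "rle b b' = (\<forall>k. b k \<le> b' k)"

definition mx :: "(nat \<Rightarrow> int) \<Rightarrow> nat" where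
  "mx b = Max {i. b i \<noteq> 0}"

definition stratum :: "nat \<Rightarrow> (nat \<Rightarrow> int) set" where
  "stratum s = (if s = 1 then {simple 1}
                else if s = 3 then {b \<in> pos_roots. mx b \<in> {2,3}}
                else {b \<in> pos_roots. mx b = s})"

definition order_ideal :: "(nat \<Rightarrow> int) set \<Rightarrow> (nat \<Rightarrow> int) set \<Rightarrow> bool" where
  "order_ideal Y J = (J \<subseteq> Y \<and> (\<forall>x\<in>J. \<forall>y\<in>Y. rle y x \<longrightarrow> y \<in> J))"

definition ideals :: "(nat \<Rightarrow> int) set \<Rightarrow> (nat \<Rightarrow> int) set set" where
  "ideals Y = {J. order_ideal Y J}"

definition dyn_adj :: "nat \<Rightarrow> nat \<Rightarrow> bool" where
  "dyn_adj i j = (gram i j = -1)"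

definition H_adj :: "(nat \<Rightarrow> int) \<Rightarrow> (nat \<Rightarrow> int) \<Rightarrow> bool" where
  "H_adj b b' = (\<exists>i\<in>{1..8}. (\<forall>k. b k - b' k = simple i k) \<or> (\<forall>k. b' k - b k = simple i k))"

definition open_map :: "'a set \<Rightarrow> ('a \<Rightarrow> 'a \<Rightarrow> bool) \<Rightarrow> 'b set \<Rightarrow> ('b \<Rightarrow> 'b \<Rightarrow> bool)
    \<Rightarrow> ('a \<Rightarrow> 'b) \<Rightarrow> bool" where
  "open_map V E W F f =
     ((\<forall>x\<in>V. f x \<in> W) \<and>
      (\<forall>x\<in>V. \<forall>y\<in>V. E x y \<longrightarrow> F (f x) (f y)) \<and>
      (\<forall>x\<in>V. f ` {y\<in>V. E x y} = {z\<in>W. F (f x) z}))"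

text \<open>The characterizing property of h_s (vertex v_i identified with i).\<close>
definition is_hs :: "nat \<Rightarrow> ((nat \<Rightarrow> int) \<Rightarrow> nat) \<Rightarrow> bool" where
  "is_hs s h = (h \<in> stratum s \<rightarrow>\<^sub>E {1..s} \<and> h (simple s) = s \<and>
                open_map (stratum s) H_adj {1..s} dyn_adj h)"

definition hS :: "nat \<Rightarrow> (nat \<Rightarrow> int) \<Rightarrow> nat" where
  "hS s = (THE h. is_hs s h)"

definition psi :: "nat \<Rightarrow> ((nat \<Rightarrow> int) \<Rightarrow> nat) \<Rightarrow> (nat \<Rightarrow> int) set \<Rightarrow> (nat \<Rightarrow> int)" where
  "psi s h J = (\<lambda>k. simple (s + 1) k + (\<Sum>b\<in>J. simple (h b) k))"

definition highest_root :: "nat \<Rightarrow> int" where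
  "highest_root = (THE t. t \<in> pos_roots \<and> (\<forall>b\<in>pos_roots. rle b t))"

definition poset_iso_onto :: "nat \<Rightarrow> ((nat \<Rightarrow> int) \<Rightarrow> nat) \<Rightarrow> (nat \<Rightarrow> int) set \<Rightarrow> bool" where
  "poset_iso_onto s h T =
     (bij_betw (psi s h) (ideals (stratum s)) T \<and>
      (\<forall>J\<in>ideals (stratum s). \<forall>J'\<in>ideals (stratum s).
          J \<subseteq> J' \<longleftrightarrow> rle (psi s h J) (psi s h J')))"

definition target :: "nat \<Rightarrow> (nat \<Rightarrow> int) set" where
  "target s = (if s \<le> 6 then stratum (s + 1) else stratum 8 - {highest_root})"

end

theory Submission
  imports Defs
begin


definition vec :: "int list \<Rightarrow> nat \<Rightarrow> int" where
  "vec xs k = (if 1 \<le> k \<and> k \<le> 8 then xs ! (k - 1) else 0)"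

lemma sum18: "(\<Sum>i\<in>{1..8::nat}. f i) = f 1 + f 2 + f 3 + f 4 + f 5 + f 6 + f 7 + f 8"
  by (simp add: numeral_eq_Suc add.assoc)

fun nbl :: "nat \<Rightarrow> nat list" where
  "nbl i = (if i = 1 then [3] else if i = 2 then [4] else if i = 3 then [1,4] else if i = 4 then [2,3,5]
     else if i = 5 then [4,6] else if i = 6 then [5,7] else if i = 7 then [6,8] else if i = 8 then [7] else [])"

definition fsL :: "nat \<Rightarrow> int list \<Rightarrow> int" where
  "fsL i xs = 2 * xs ! (i - 1) - sum_list (map (\<lambda>j. xs ! (j - 1)) (nbl i))"

lemma len8: "length xs = 8 \<Longrightarrow> \<exists>x1 x2 x3 x4 x5 x6 x7 x8. xs = [x1,x2,x3,x4,x5,x6,x7,x8]"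
  by (simp add: numeral_eq_Suc length_Suc_conv) blast

lemma form_simple: assumes "i \<in> {1..8}" shows "form (simple i) b = (\<Sum>j\<in>{1..8}. b j * gram i j)"
proof -
  have "form (simple i) b = (\<Sum>i'\<in>{1..8}. \<Sum>j\<in>{1..8}. simple i i' * b j * gram i' j)" by (simp add: form_def)
  also have "\<dots> = (\<Sum>i'\<in>{1..8}. if i' = i then (\<Sum>j\<in>{1..8}. b j * gram i j) else 0)"
    by (intro sum.cong refl) (auto simp: simple_def)
  also have "\<dots> = (\<Sum>j\<in>{1..8}. b j * gram i j)" using assms by (simp add: sum.delta)
  finally show ?thesis .
qed

lemma form_vec: assumes "i \<in> {1..8}" "length xs = 8" shows "form (simple i) (vec xs) = fsL i xs"
proof -
  obtain x1 x2 x3 x4 x5 x6 x7 x8 where xs: "xs = [x1,x2,x3,x4,x5,x6,x7,x8]" using len8 assms(2) by blast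
  have "i = 1 \<or> i = 2 \<or> i = 3 \<or> i = 4 \<or> i = 5 \<or> i = 6 \<or> i = 7 \<or> i = 8" using assms(1) by auto
  then show ?thesis unfolding form_simple[OF assms(1)] sum18
    by (elim disjE) (simp_all add: xs vec_def gram_def E8_edges_def fsL_def)
qed

lemma to_list: "length x = 8 \<Longrightarrow> map (vec x) [1..<9] = x"
  by (rule nth_equalityI) (auto simp: vec_def)

lemma vec_inj: "length x = 8 \<Longrightarrow> length y = 8 \<Longrightarrow> vec x = vec y \<Longrightarrow> x = y"
  by (metis to_list)

lemma vec_inj_iff: "length x = 8 \<Longrightarrow> length y = 8 \<Longrightarrow> vec x = vec y \<longleftrightarrow> x = y"
  using vec_inj by blast

definition leL :: "int list \<Rightarrow> int list \<Rightarrow> bool" where "leL x y = list_all2 (\<le>) x y"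

lemma rle_vec: assumes "length x = 8" "length y = 8" shows "rle (vec x) (vec y) \<longleftrightarrow> leL x y"
proof
  assume "rle (vec x) (vec y)"
  then have "\<forall>i<8. x ! i \<le> y ! i"
    unfolding rle_def vec_def
  proof (intro allI impI)
    fix i :: nat assume a: "\<forall>k. (if 1 \<le> k \<and> k \<le> 8 then x ! (k - 1) else 0) \<le> (if 1 \<le> k \<and> k \<le> 8 then y ! (k - 1) else 0)" and "i < 8"
    then show "x ! i \<le> y ! i" using a[rule_format, of "Suc i"] by simp
  qed
  then show "leL x y" using assms by (simp add: leL_def list_all2_conv_all_nth)
next
  assume "leL x y"
  then have "\<forall>i<8. x ! i \<le> y ! i" using assms by (simp add: leL_def list_all2_conv_all_nth)
  then show "rle (vec x) (vec y)" by (auto simp: rle_def vec_def)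
qed

definition unitL :: "nat \<Rightarrow> int list" where "unitL i = map (\<lambda>k. if k = i then 1 else 0) [1,2,3,4,5,6,7,8]"

lemma simple_vec: assumes "i \<in> {1..8}" shows "simple i = vec (unitL i)"
proof (rule ext)
  fix k show "simple i k = vec (unitL i) k"
  proof (cases "k \<in> {1..8}")
    case True then have "k = 1 \<or> k = 2 \<or> k = 3 \<or> k = 4 \<or> k = 5 \<or> k = 6 \<or> k = 7 \<or> k = 8" by auto
    then show ?thesis by (elim disjE) (auto simp: simple_def vec_def unitL_def)
  next
    case False then show ?thesis using assms by (auto simp: simple_def vec_def)
  qed
qed

lemma length_unitL[simp]: "length (unitL i) = 8" by (simp add: unitL_def)

definition reflL :: "nat \<Rightarrow> int list \<Rightarrow> int list" where
  "reflL i xs = xs[i - 1 := xs ! (i - 1) - fsL i xs]"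

lemma refl_vec: assumes "i \<in> {1..8}" "length xs = 8" shows "refl i (vec xs) = vec (reflL i xs)"
  unfolding refl_def form_vec[OF assms] using assms
  by (auto simp: fun_eq_iff vec_def reflL_def simple_def nth_list_update)

lemma length_reflL[simp]: "length (reflL i xs) = length xs" by (simp add: reflL_def)

lemma fsL_neg: assumes "length xs = 8" "i \<in> {1..8}" shows "fsL i (map uminus xs) = - fsL i xs"
proof -
  obtain x1 x2 x3 x4 x5 x6 x7 x8 where xs: "xs = [x1,x2,x3,x4,x5,x6,x7,x8]" using len8 assms(1) by blast
  have "i = 1 \<or> i = 2 \<or> i = 3 \<or> i = 4 \<or> i = 5 \<or> i = 6 \<or> i = 7 \<or> i = 8" using assms(2) by auto
  then show ?thesis by (elim disjE) (simp_all add: xs fsL_def)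
qed

lemma reflL_neg: "length xs = 8 \<Longrightarrow> i \<in> {1..8} \<Longrightarrow> reflL i (map uminus xs) = map uminus (reflL i xs)"
proof -
  assume a: "length xs = 8" "i \<in> {1..8}"
  then have "i - 1 < length xs" by auto
  then show ?thesis using a by (simp add: reflL_def fsL_neg map_update)
qed

definition PL :: "int list list" where
  "PL = [[0,0,0,0,0,0,0,1],
  [0,0,0,0,0,0,1,0],
  [0,0,0,0,0,1,0,0],
  [0,0,0,0,1,0,0,0],
  [0,0,0,1,0,0,0,0],
  [0,0,1,0,0,0,0,0],
  [0,1,0,0,0,0,0,0],
  [1,0,0,0,0,0,0,0],
  [0,0,0,0,0,0,1,1],
  [0,0,0,0,0,1,1,0],
  [0,0,0,0,1,1,0,0],
  [0,0,0,1,1,0,0,0],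
  [0,0,1,1,0,0,0,0],
  [0,1,0,1,0,0,0,0],
  [1,0,1,0,0,0,0,0],
  [0,0,0,0,0,1,1,1],
  [0,0,0,0,1,1,1,0],
  [0,0,0,1,1,1,0,0],
  [0,0,1,1,1,0,0,0],
  [0,1,0,1,1,0,0,0],
  [0,1,1,1,0,0,0,0],
  [1,0,1,1,0,0,0,0],
  [0,0,0,0,1,1,1,1],
  [0,0,0,1,1,1,1,0],
  [0,0,1,1,1,1,0,0],
  [0,1,0,1,1,1,0,0],
  [0,1,1,1,1,0,0,0],
  [1,0,1,1,1,0,0,0],
  [1,1,1,1,0,0,0,0],
  [0,0,0,1,1,1,1,1],
  [0,0,1,1,1,1,1,0],
  [0,1,0,1,1,1,1,0],
  [0,1,1,1,1,1,0,0],
  [0,1,1,2,1,0,0,0],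
  [1,0,1,1,1,1,0,0],
  [1,1,1,1,1,0,0,0],
  [0,0,1,1,1,1,1,1],
  [0,1,0,1,1,1,1,1],
  [0,1,1,1,1,1,1,0],
  [0,1,1,2,1,1,0,0],
  [1,0,1,1,1,1,1,0],
  [1,1,1,1,1,1,0,0],
  [1,1,1,2,1,0,0,0],
  [0,1,1,1,1,1,1,1],
  [0,1,1,2,1,1,1,0],
  [0,1,1,2,2,1,0,0],
  [1,0,1,1,1,1,1,1],
  [1,1,1,1,1,1,1,0],
  [1,1,1,2,1,1,0,0],
  [1,1,2,2,1,0,0,0],
  [0,1,1,2,1,1,1,1],
  [0,1,1,2,2,1,1,0],
  [1,1,1,1,1,1,1,1],
  [1,1,1,2,1,1,1,0],
  [1,1,1,2,2,1,0,0],
  [1,1,2,2,1,1,0,0],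
  [0,1,1,2,2,1,1,1],
  [0,1,1,2,2,2,1,0],
  [1,1,1,2,1,1,1,1],
  [1,1,1,2,2,1,1,0],
  [1,1,2,2,1,1,1,0],
  [1,1,2,2,2,1,0,0],
  [0,1,1,2,2,2,1,1],
  [1,1,1,2,2,1,1,1],
  [1,1,1,2,2,2,1,0],
  [1,1,2,2,1,1,1,1],
  [1,1,2,2,2,1,1,0],
  [1,1,2,3,2,1,0,0],
  [0,1,1,2,2,2,2,1],
  [1,1,1,2,2,2,1,1],
  [1,1,2,2,2,1,1,1],
  [1,1,2,2,2,2,1,0],
  [1,1,2,3,2,1,1,0],
  [1,2,2,3,2,1,0,0],
  [1,1,1,2,2,2,2,1],
  [1,1,2,2,2,2,1,1],
  [1,1,2,3,2,1,1,1],
  [1,1,2,3,2,2,1,0],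
  [1,2,2,3,2,1,1,0],
  [1,1,2,2,2,2,2,1],
  [1,1,2,3,2,2,1,1],
  [1,1,2,3,3,2,1,0],
  [1,2,2,3,2,1,1,1],
  [1,2,2,3,2,2,1,0],
  [1,1,2,3,2,2,2,1],
  [1,1,2,3,3,2,1,1],
  [1,2,2,3,2,2,1,1],
  [1,2,2,3,3,2,1,0],
  [1,1,2,3,3,2,2,1],
  [1,2,2,3,2,2,2,1],
  [1,2,2,3,3,2,1,1],
  [1,2,2,4,3,2,1,0],
  [1,1,2,3,3,3,2,1],
  [1,2,2,3,3,2,2,1],
  [1,2,2,4,3,2,1,1],
  [1,2,3,4,3,2,1,0],
  [1,2,2,3,3,3,2,1],
  [1,2,2,4,3,2,2,1],
  [1,2,3,4,3,2,1,1],
  [2,2,3,4,3,2,1,0],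
  [1,2,2,4,3,3,2,1],
  [1,2,3,4,3,2,2,1],
  [2,2,3,4,3,2,1,1],
  [1,2,2,4,4,3,2,1],
  [1,2,3,4,3,3,2,1],
  [2,2,3,4,3,2,2,1],
  [1,2,3,4,4,3,2,1],
  [2,2,3,4,3,3,2,1],
  [1,2,3,5,4,3,2,1],
  [2,2,3,4,4,3,2,1],
  [1,3,3,5,4,3,2,1],
  [2,2,3,5,4,3,2,1],
  [2,2,4,5,4,3,2,1],
  [2,3,3,5,4,3,2,1],
  [2,3,4,5,4,3,2,1],
  [2,3,4,6,4,3,2,1],
  [2,3,4,6,5,3,2,1],
  [2,3,4,6,5,4,2,1],
  [2,3,4,6,5,4,3,1],
  [2,3,4,6,5,4,3,2]]"

definition thetaL :: "int list" where "thetaL = [2,3,4,6,5,4,3,2]"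

definition SL3 :: "int list list" where
  "SL3 = [[0,0,1,0,0,0,0,0],
  [0,1,0,0,0,0,0,0],
  [1,0,1,0,0,0,0,0]]"

definition SL4 :: "int list list" where
  "SL4 = [[0,0,0,1,0,0,0,0],
  [0,0,1,1,0,0,0,0],
  [0,1,0,1,0,0,0,0],
  [0,1,1,1,0,0,0,0],
  [1,0,1,1,0,0,0,0],
  [1,1,1,1,0,0,0,0]]"

definition SL5 :: "int list list" where
  "SL5 = [[0,0,0,0,1,0,0,0],
  [0,0,0,1,1,0,0,0],
  [0,0,1,1,1,0,0,0],
  [0,1,0,1,1,0,0,0],
  [0,1,1,1,1,0,0,0],
  [1,0,1,1,1,0,0,0],
  [0,1,1,2,1,0,0,0],
  [1,1,1,1,1,0,0,0],
  [1,1,1,2,1,0,0,0],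
  [1,1,2,2,1,0,0,0]]"

definition SL6 :: "int list list" where
  "SL6 = [[0,0,0,0,0,1,0,0],
  [0,0,0,0,1,1,0,0],
  [0,0,0,1,1,1,0,0],
  [0,0,1,1,1,1,0,0],
  [0,1,0,1,1,1,0,0],
  [0,1,1,1,1,1,0,0],
  [1,0,1,1,1,1,0,0],
  [0,1,1,2,1,1,0,0],
  [1,1,1,1,1,1,0,0],
  [0,1,1,2,2,1,0,0],
  [1,1,1,2,1,1,0,0],
  [1,1,1,2,2,1,0,0],
  [1,1,2,2,1,1,0,0],
  [1,1,2,2,2,1,0,0],
  [1,1,2,3,2,1,0,0],
  [1,2,2,3,2,1,0,0]]"

definition SL7 :: "int list list" where
  "SL7 = [[0,0,0,0,0,0,1,0],
  [0,0,0,0,0,1,1,0],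
  [0,0,0,0,1,1,1,0],
  [0,0,0,1,1,1,1,0],
  [0,0,1,1,1,1,1,0],
  [0,1,0,1,1,1,1,0],
  [0,1,1,1,1,1,1,0],
  [1,0,1,1,1,1,1,0],
  [0,1,1,2,1,1,1,0],
  [1,1,1,1,1,1,1,0],
  [0,1,1,2,2,1,1,0],
  [1,1,1,2,1,1,1,0],
  [0,1,1,2,2,2,1,0],
  [1,1,1,2,2,1,1,0],
  [1,1,2,2,1,1,1,0],
  [1,1,1,2,2,2,1,0],
  [1,1,2,2,2,1,1,0],
  [1,1,2,2,2,2,1,0],
  [1,1,2,3,2,1,1,0],
  [1,1,2,3,2,2,1,0],
  [1,2,2,3,2,1,1,0],
  [1,1,2,3,3,2,1,0],
  [1,2,2,3,2,2,1,0],
  [1,2,2,3,3,2,1,0],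
  [1,2,2,4,3,2,1,0],
  [1,2,3,4,3,2,1,0],
  [2,2,3,4,3,2,1,0]]"

definition SL8 :: "int list list" where
  "SL8 = [[0,0,0,0,0,0,0,1],
  [0,0,0,0,0,0,1,1],
  [0,0,0,0,0,1,1,1],
  [0,0,0,0,1,1,1,1],
  [0,0,0,1,1,1,1,1],
  [0,0,1,1,1,1,1,1],
  [0,1,0,1,1,1,1,1],
  [0,1,1,1,1,1,1,1],
  [1,0,1,1,1,1,1,1],
  [0,1,1,2,1,1,1,1],
  [1,1,1,1,1,1,1,1],
  [0,1,1,2,2,1,1,1],
  [1,1,1,2,1,1,1,1],
  [0,1,1,2,2,2,1,1],
  [1,1,1,2,2,1,1,1],
  [1,1,2,2,1,1,1,1],
  [0,1,1,2,2,2,2,1],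
  [1,1,1,2,2,2,1,1],
  [1,1,2,2,2,1,1,1],
  [1,1,1,2,2,2,2,1],
  [1,1,2,2,2,2,1,1],
  [1,1,2,3,2,1,1,1],
  [1,1,2,2,2,2,2,1],
  [1,1,2,3,2,2,1,1],
  [1,2,2,3,2,1,1,1],
  [1,1,2,3,2,2,2,1],
  [1,1,2,3,3,2,1,1],
  [1,2,2,3,2,2,1,1],
  [1,1,2,3,3,2,2,1],
  [1,2,2,3,2,2,2,1],
  [1,2,2,3,3,2,1,1],
  [1,1,2,3,3,3,2,1],
  [1,2,2,3,3,2,2,1],
  [1,2,2,4,3,2,1,1],
  [1,2,2,3,3,3,2,1],
  [1,2,2,4,3,2,2,1],
  [1,2,3,4,3,2,1,1],
  [1,2,2,4,3,3,2,1],
  [1,2,3,4,3,2,2,1],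
  [2,2,3,4,3,2,1,1],
  [1,2,2,4,4,3,2,1],
  [1,2,3,4,3,3,2,1],
  [2,2,3,4,3,2,2,1],
  [1,2,3,4,4,3,2,1],
  [2,2,3,4,3,3,2,1],
  [1,2,3,5,4,3,2,1],
  [2,2,3,4,4,3,2,1],
  [1,3,3,5,4,3,2,1],
  [2,2,3,5,4,3,2,1],
  [2,2,4,5,4,3,2,1],
  [2,3,3,5,4,3,2,1],
  [2,3,4,5,4,3,2,1],
  [2,3,4,6,4,3,2,1],
  [2,3,4,6,5,3,2,1],
  [2,3,4,6,5,4,2,1],
  [2,3,4,6,5,4,3,1],
  [2,3,4,6,5,4,3,2]]"

definition TL7 :: "int list list" where
  "TL7 = [[0,0,0,0,0,0,0,1],
  [0,0,0,0,0,0,1,1],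
  [0,0,0,0,0,1,1,1],
  [0,0,0,0,1,1,1,1],
  [0,0,0,1,1,1,1,1],
  [0,0,1,1,1,1,1,1],
  [0,1,0,1,1,1,1,1],
  [0,1,1,1,1,1,1,1],
  [1,0,1,1,1,1,1,1],
  [0,1,1,2,1,1,1,1],
  [1,1,1,1,1,1,1,1],
  [0,1,1,2,2,1,1,1],
  [1,1,1,2,1,1,1,1],
  [0,1,1,2,2,2,1,1],
  [1,1,1,2,2,1,1,1],
  [1,1,2,2,1,1,1,1],
  [0,1,1,2,2,2,2,1],
  [1,1,1,2,2,2,1,1],
  [1,1,2,2,2,1,1,1],
  [1,1,1,2,2,2,2,1],
  [1,1,2,2,2,2,1,1],
  [1,1,2,3,2,1,1,1],
  [1,1,2,2,2,2,2,1],
  [1,1,2,3,2,2,1,1],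
  [1,2,2,3,2,1,1,1],
  [1,1,2,3,2,2,2,1],
  [1,1,2,3,3,2,1,1],
  [1,2,2,3,2,2,1,1],
  [1,1,2,3,3,2,2,1],
  [1,2,2,3,2,2,2,1],
  [1,2,2,3,3,2,1,1],
  [1,1,2,3,3,3,2,1],
  [1,2,2,3,3,2,2,1],
  [1,2,2,4,3,2,1,1],
  [1,2,2,3,3,3,2,1],
  [1,2,2,4,3,2,2,1],
  [1,2,3,4,3,2,1,1],
  [1,2,2,4,3,3,2,1],
  [1,2,3,4,3,2,2,1],
  [2,2,3,4,3,2,1,1],
  [1,2,2,4,4,3,2,1],
  [1,2,3,4,3,3,2,1],
  [2,2,3,4,3,2,2,1],
  [1,2,3,4,4,3,2,1],
  [2,2,3,4,3,3,2,1],
  [1,2,3,5,4,3,2,1],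
  [2,2,3,4,4,3,2,1],
  [1,3,3,5,4,3,2,1],
  [2,2,3,5,4,3,2,1],
  [2,2,4,5,4,3,2,1],
  [2,3,3,5,4,3,2,1],
  [2,3,4,5,4,3,2,1],
  [2,3,4,6,4,3,2,1],
  [2,3,4,6,5,3,2,1],
  [2,3,4,6,5,4,2,1],
  [2,3,4,6,5,4,3,1]]"

definition isPos :: "int list \<Rightarrow> bool" where "isPos xs = (xs \<in> set PL)"

lemma isPos_all: "list_all isPos PL"
  by (simp add: isPos_def list_all_iff)

lemmas isPos_facts = isPos_all[unfolded PL_def, simplified]

lemma closure_chk: "list_all (\<lambda>xs. \<forall>i\<in>{1,2,3,4,5,6,7,8::nat}. isPos (reflL i xs) \<or> isPos (map uminus (reflL i xs))) PL"
  unfolding PL_def by (simp add: reflL_def fsL_def isPos_facts)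

lemma pos_chk: "list_all (\<lambda>xs. (\<exists>i\<in>{1,2,3,4,5,6,7,8::nat}. xs = unitL i) \<or> (\<exists>i\<in>{1,2,3,4,5,6,7,8::nat}. isPos (reflL i xs) \<and> sum_list (reflL i xs) < sum_list xs)) PL"
  unfolding PL_def by (simp add: reflL_def fsL_def isPos_facts unitL_def)

lemma PL_basic: "list_all (\<lambda>xs. length xs = 8 \<and> list_all (\<lambda>x. 0 \<le> x) xs \<and> list_ex (\<lambda>x. 0 < x) xs) PL"
  unfolding PL_def by simp

lemma units_pos: "\<forall>i\<in>{1,2,3,4,5,6,7,8::nat}. isPos (unitL i)"
  by (simp add: unitL_def isPos_facts)


lemma reflL_invol: assumes "length xs = 8" "i \<in> {1..8}" shows "reflL i (reflL i xs) = xs"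
proof -
  obtain x1 x2 x3 x4 x5 x6 x7 x8 where xs: "xs = [x1,x2,x3,x4,x5,x6,x7,x8]" using len8 assms(1) by blast
  have "i = 1 \<or> i = 2 \<or> i = 3 \<or> i = 4 \<or> i = 5 \<or> i = 6 \<or> i = 7 \<or> i = 8" using assms(2) by auto
  then show ?thesis by (elim disjE) (simp_all add: xs fsL_def reflL_def)
qed

lemma PLb: "xs \<in> set PL \<Longrightarrow> length xs = 8 \<and> (\<forall>x\<in>set xs. 0 \<le> x) \<and> (\<exists>x\<in>set xs. 0 < x)"
  using PL_basic by (simp add: list_all_iff list_ex_iff)

lemma fin18: "(i::nat) \<in> {1,2,3,4,5,6,7,8} \<longleftrightarrow> i \<in> {1..8}" by auto

lemma set18: "{1,2,3,4,5,6,7,8::nat} = {1..8}" by auto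

lemma closure': "xs \<in> set PL \<Longrightarrow> i \<in> {1..8} \<Longrightarrow> isPos (reflL i xs) \<or> isPos (map uminus (reflL i xs))"
  using closure_chk[unfolded set18] unfolding list_all_iff by blast

lemma pos': "xs \<in> set PL \<Longrightarrow> (\<exists>i\<in>{1..8}. xs = unitL i) \<or> (\<exists>i\<in>{1..8}. isPos (reflL i xs) \<and> sum_list (reflL i xs) < sum_list xs)"
  using pos_chk[unfolded set18] unfolding list_all_iff by blast

lemma units': "i \<in> {1..8} \<Longrightarrow> unitL i \<in> set PL"
  using units_pos[unfolded set18] unfolding isPos_def by blast

lemma roots_sub: "b \<in> roots \<Longrightarrow> \<exists>xs\<in>set PL. b = vec xs \<or> b = vec (map uminus xs)"
proof (induction rule: roots.induct)
  case (simple_root i)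
  then show ?case using units'[OF simple_root] simple_vec[OF simple_root] by blast
next
  case (refl_root b i)
  then obtain xs where xs: "xs \<in> set PL" and b: "b = vec xs \<or> b = vec (map uminus xs)" by blast
  have len: "length xs = 8" using PLb[OF xs] by simp
  have cl: "isPos (reflL i xs) \<or> isPos (map uminus (reflL i xs))"
    using closure'[OF xs refl_root.hyps(2)] .
  have mm: "map uminus (map uminus ys) = ys" for ys :: "int list" by (simp add: o_def)
  from b show ?case
  proof
    assume b: "b = vec xs"
    then have "refl i b = vec (reflL i xs)" using refl_vec[OF refl_root.hyps(2) len] by simp
    then show ?case using cl mm[of "reflL i xs"] unfolding isPos_def by metis
  next
    assume b: "b = vec (map uminus xs)"
    then have "refl i b = vec (map uminus (reflL i xs))"
      using refl_vec[OF refl_root.hyps(2), of "map uminus xs"] len reflL_neg[OF len refl_root.hyps(2)] by simp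
    then show ?case using cl mm[of "reflL i xs"] unfolding isPos_def by metis
  qed
qed

lemma PL_roots: "xs \<in> set PL \<Longrightarrow> vec xs \<in> roots"
proof (induction "nat (sum_list xs)" arbitrary: xs rule: less_induct)
  case less
  have len: "length xs = 8" using PLb[OF less.prems] by simp
  have "(\<exists>i\<in>{1..8}. xs = unitL i) \<or> (\<exists>i\<in>{1..8}. isPos (reflL i xs) \<and> sum_list (reflL i xs) < sum_list xs)"
    using pos'[OF less.prems] .
  then show ?case
  proof
    assume "\<exists>i\<in>{1..8}. xs = unitL i"
    then show ?thesis using simple_vec roots.simple_root by metis
  next
    assume "\<exists>i\<in>{1..8}. isPos (reflL i xs) \<and> sum_list (reflL i xs) < sum_list xs"
    then obtain i where i: "i \<in> {1..8}" "reflL i xs \<in> set PL" "sum_list (reflL i xs) < sum_list xs"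
      by (auto simp: isPos_def)
    have "0 \<le> sum_list (reflL i xs)" using PLb[OF i(2)] by (simp add: sum_list_nonneg)
    then have "vec (reflL i xs) \<in> roots" using less.hyps[OF _ i(2)] i(3) by simp
    then have "refl i (vec (reflL i xs)) \<in> roots" using i(1) by (rule roots.refl_root)
    then show ?thesis using refl_vec[OF i(1)] len reflL_invol[OF len i(1)] by simp
  qed
qed

lemma pos_roots_eq: "pos_roots = vec ` set PL"
proof
  show "pos_roots \<subseteq> vec ` set PL"
  proof
    fix b assume "b \<in> pos_roots"
    then have b: "b \<in> roots" "\<forall>k. 0 \<le> b k" by (auto simp: pos_roots_def)
    obtain xs where xs: "xs \<in> set PL" "b = vec xs \<or> b = vec (map uminus xs)" using roots_sub[OF b(1)] by blast
    show "b \<in> vec ` set PL"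
    proof (cases "b = vec xs")
      case True then show ?thesis using xs by auto
    next
      case False
      then have bb: "b = vec (map uminus xs)" using xs by auto
      obtain j where j: "j < length xs" "0 < xs ! j" using PLb[OF xs(1)] by (auto simp: in_set_conv_nth)
      have "b (Suc j) = - (xs ! j)" using bb j PLb[OF xs(1)] by (simp add: vec_def)
      then show ?thesis using b(2) j by (metis neg_less_0_iff_less not_le)
    qed
  qed
next
  show "vec ` set PL \<subseteq> pos_roots"
  proof
    fix b assume "b \<in> vec ` set PL"
    then obtain xs where xs: "xs \<in> set PL" "b = vec xs" by blast
    have "\<forall>k. 0 \<le> b k" using PLb[OF xs(1)] xs(2) by (auto simp: vec_def)
    then show "b \<in> pos_roots" using PL_roots[OF xs(1)] xs(2) by (simp add: pos_roots_def)
  qed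
qed


definition formL :: "int list \<Rightarrow> int" where
  "formL xs = xs!0 * fsL 1 xs + xs!1 * fsL 2 xs + xs!2 * fsL 3 xs + xs!3 * fsL 4 xs
     + xs!4 * fsL 5 xs + xs!5 * fsL 6 xs + xs!6 * fsL 7 xs + xs!7 * fsL 8 xs"

lemma form_expand: "form b c = (\<Sum>i\<in>{1..8}. b i * form (simple i) c)"
proof -
  have "form b c = (\<Sum>i\<in>{1..8}. \<Sum>j\<in>{1..8}. b i * (c j * gram i j))"
    unfolding form_def by (simp only: mult.assoc)
  also have "\<dots> = (\<Sum>i\<in>{1..8}. b i * (\<Sum>j\<in>{1..8}. c j * gram i j))"
    by (simp only: sum_distrib_left)
  also have "\<dots> = (\<Sum>i\<in>{1..8}. b i * form (simple i) c)"
    by (intro sum.cong refl) (simp add: form_simple)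
  finally show ?thesis .
qed

lemma form_vec_vec: assumes "length xs = 8" shows "form (vec xs) (vec xs) = formL xs"
proof -
  have "form (vec xs) (vec xs) = (\<Sum>i\<in>{1..8}. vec xs i * form (simple i) (vec xs))"
    by (rule form_expand)
  also have "\<dots> = (\<Sum>i\<in>{1..8}. vec xs i * fsL i xs)"
    by (intro sum.cong refl) (simp add: form_vec assms)
  also have "\<dots> = formL xs" unfolding sum18 by (simp add: vec_def formL_def)
  finally show ?thesis .
qed

lemma formL_PL: "list_all (\<lambda>xs. formL xs = 2) PL"
  unfolding PL_def by (simp add: formL_def fsL_def)

fun mxL :: "int list \<Rightarrow> nat" where
  "mxL [] = 0"
| "mxL (x # xs) = (if mxL xs \<noteq> 0 then Suc (mxL xs) else if x \<noteq> 0 then 1 else 0)"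

lemma mxL_nz: "mxL xs \<noteq> 0 \<Longrightarrow> mxL xs \<le> length xs \<and> xs ! (mxL xs - 1) \<noteq> 0"
  by (induction xs) (auto split: if_splits)

lemma mxL_ex: "\<exists>x\<in>set xs. x \<noteq> 0 \<Longrightarrow> mxL xs \<noteq> 0"
  by (induction xs) (auto split: if_splits)

lemma mxL_zero: "mxL xs \<le> j \<Longrightarrow> j < length xs \<Longrightarrow> xs ! j = 0"
proof (induction xs arbitrary: j)
  case Nil then show ?case by simp
next
  case (Cons x xs)
  show ?case
  proof (cases j)
    case 0 then show ?thesis using Cons.prems by (auto split: if_splits)
  next
    case (Suc j') then show ?thesis using Cons by (auto split: if_splits)
  qed
qed

lemma mx_vec: assumes "length xs = 8" "\<exists>x\<in>set xs. x \<noteq> 0" shows "mx (vec xs) = mxL xs"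
proof -
  have S: "{i. vec xs i \<noteq> 0} \<subseteq> {1..8}" by (auto simp: vec_def split: if_splits)
  have nz: "mxL xs \<noteq> 0" using mxL_ex[OF assms(2)] .
  have in1: "vec xs (mxL xs) \<noteq> 0" using mxL_nz[OF nz] nz assms(1) by (simp add: vec_def)
  have le: "j \<le> mxL xs" if "vec xs j \<noteq> 0" for j
  proof (rule ccontr)
    assume "\<not> j \<le> mxL xs"
    then have "mxL xs \<le> j - 1" "j - 1 < length xs" using that assms(1) by (auto simp: vec_def split: if_splits)
    then have "xs ! (j - 1) = 0" by (rule mxL_zero)
    then show False using that by (simp add: vec_def split: if_splits)
  qed
  show ?thesis unfolding mx_def
    by (rule Max_eqI) (use S finite_subset in1 le in auto)
qed

lemma stratum_eq: assumes "s \<noteq> 1"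
  shows "stratum s = vec ` set (filter (\<lambda>xs. if s = 3 then mxL xs = 2 \<or> mxL xs = 3 else mxL xs = s) PL)"
proof -
  have "stratum s = {b \<in> vec ` set PL. if s = 3 then mx b \<in> {2,3} else mx b = s}"
    using assms unfolding stratum_def pos_roots_eq by auto
  also have "\<dots> = vec ` set (filter (\<lambda>xs. if s = 3 then mxL xs = 2 \<or> mxL xs = 3 else mxL xs = s) PL)"
  proof -
    have "mx (vec xs) = mxL xs" if "xs \<in> set PL" for xs
    proof -
      obtain x where x: "x \<in> set xs" "0 < x" and l: "length xs = 8" using PLb[OF \<open>xs \<in> set PL\<close>] by blast
      have "\<exists>y\<in>set xs. y \<noteq> 0" using x by (intro bexI[of _ x]) auto
      then show ?thesis by (rule mx_vec[OF l])
    qed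
    then show ?thesis by auto
  qed
  finally show ?thesis .
qed

lemma f3: "filter (\<lambda>xs. mxL xs = 2 \<or> mxL xs = 3) PL = SL3" by (simp add: PL_def SL3_def )
lemma f4: "filter (\<lambda>xs. mxL xs = 4) PL = SL4" by (simp add: PL_def SL4_def )
lemma f5: "filter (\<lambda>xs. mxL xs = 5) PL = SL5" by (simp add: PL_def SL5_def )
lemma f6: "filter (\<lambda>xs. mxL xs = 6) PL = SL6" by (simp add: PL_def SL6_def )
lemma f7: "filter (\<lambda>xs. mxL xs = 7) PL = SL7" by (simp add: PL_def SL7_def )
lemma f8: "filter (\<lambda>xs. mxL xs = 8) PL = SL8" by (simp add: PL_def SL8_def )

lemma stratum3: "stratum 3 = vec ` set SL3" using stratum_eq[of 3] f3 by simp
lemma stratum4: "stratum 4 = vec ` set SL4" using stratum_eq[of 4] f4 by simp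
lemma stratum5: "stratum 5 = vec ` set SL5" using stratum_eq[of 5] f5 by simp
lemma stratum6: "stratum 6 = vec ` set SL6" using stratum_eq[of 6] f6 by simp
lemma stratum7: "stratum 7 = vec ` set SL7" using stratum_eq[of 7] f7 by simp
lemma stratum8: "stratum 8 = vec ` set SL8" using stratum_eq[of 8] f8 by simp

lemma theta_chk: "isPos thetaL \<and> list_all (\<lambda>xs. leL xs thetaL) PL"
  unfolding PL_def thetaL_def by (simp add: isPos_facts leL_def)

lemma highest_root_eq: "highest_root = vec thetaL"
  unfolding highest_root_def
proof (rule the_equality)
  have th: "thetaL \<in> set PL" using theta_chk by (simp add: isPos_def)
  have le: "rle b (vec thetaL)" if bp: "b \<in> pos_roots" for b
  proof -
    obtain xs where "xs \<in> set PL" "b = vec xs" using bp unfolding pos_roots_eq by blast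
    then show ?thesis using theta_chk PLb th rle_vec by (auto simp: list_all_iff)
  qed
  show "vec thetaL \<in> pos_roots \<and> (\<forall>b\<in>pos_roots. rle b (vec thetaL))"
    using th le pos_roots_eq by auto
  fix t assume t: "t \<in> pos_roots \<and> (\<forall>b\<in>pos_roots. rle b t)"
  then have "rle t (vec thetaL)" "rle (vec thetaL) t" using le th pos_roots_eq by auto
  then show "t = vec thetaL" by (auto simp: rle_def fun_eq_iff intro: antisym)
qed

lemma t7: "filter (\<lambda>xs. xs \<noteq> thetaL) SL8 = TL7" by (simp add: SL8_def TL7_def thetaL_def)

lemma SL8_len: "list_all (\<lambda>xs. length xs = 8) SL8" by (simp add: SL8_def)

lemma target7: "target 7 = vec ` set TL7"
proof -
  have "target 7 = vec ` set SL8 - {vec thetaL}" by (simp add: target_def stratum8 highest_root_eq)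
  also have "\<dots> = vec ` set (filter (\<lambda>xs. xs \<noteq> thetaL) SL8)"
  proof -
    have "length thetaL = 8" by (simp add: thetaL_def)
    then show ?thesis using SL8_len vec_inj by (auto simp: list_all_iff)
  qed
  finally show ?thesis using t7 by simp
qed

lemma target3: "target 3 = vec ` set SL4" by (simp add: target_def stratum4)
lemma target4: "target 4 = vec ` set SL5" by (simp add: target_def stratum5)
lemma target5: "target 5 = vec ` set SL6" by (simp add: target_def stratum6)
lemma target6: "target 6 = vec ` set SL7" by (simp add: target_def stratum7)


fun search :: "('a list \<Rightarrow> bool) \<Rightarrow> 'a list \<Rightarrow> 'b list \<Rightarrow> 'a list \<Rightarrow> 'a list list" where
  "search ok cs [] a = [a]"
| "search ok cs (d # ds) a = concat (map (\<lambda>c. if ok (a @ [c]) then search ok cs ds (a @ [c]) else []) cs)"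

lemma search_complete:
  "length full = length a + length ds \<Longrightarrow> take (length a) full = a \<Longrightarrow> set full \<subseteq> set cs \<Longrightarrow>
   (\<forall>l. length a < l \<and> l \<le> length full \<longrightarrow> ok (take l full)) \<Longrightarrow> full \<in> set (search ok cs ds a)"
proof (induction ds arbitrary: a)
  case Nil
  then show ?case by simp
next
  case (Cons d ds)
  let ?c = "full ! length a"
  have lt: "length a < length full" using Cons.prems(1) by simp
  have c: "?c \<in> set cs" using Cons.prems(3) lt by (meson nth_mem subsetD)
  have t: "take (Suc (length a)) full = a @ [?c]"
    using Cons.prems(2) lt by (simp add: take_Suc_conv_app_nth)
  have ok: "ok (a @ [?c])" using Cons.prems(4) lt t by (metis Suc_leI lessI)
  have "full \<in> set (search ok cs ds (a @ [?c]))"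
  proof (rule Cons.IH)
    show "length full = length (a @ [?c]) + length ds" using Cons.prems(1) by simp
    show "take (length (a @ [?c])) full = a @ [?c]" using t by simp
    show "set full \<subseteq> set cs" by fact
    show "\<forall>l. length (a @ [?c]) < l \<and> l \<le> length full \<longrightarrow> ok (take l full)" using Cons.prems(4) by simp
  qed
  then show ?case using c ok by auto
qed

lemma search_sound:
  "x \<in> set (search ok cs ds a) \<Longrightarrow> length x = length a + length ds \<and> take (length a) x = a \<and>
     (\<forall>l. length a < l \<and> l \<le> length x \<longrightarrow> ok (take l x))"
proof (induction ds arbitrary: a)
  case Nil
  then have xa: "x = a" by simp
  show ?case
  proof (intro conjI allI impI)
    show "length x = length a + length []" using xa by simp
    show "take (length a) x = a" using xa by simp
    fix l assume "length a < l \<and> l \<le> length x"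
    then have "length a < l" "l \<le> length a" using xa by auto
    then have False by (simp add: not_le[symmetric])
    then show "ok (take l x)" ..
  qed
next
  case (Cons d ds)
  from Cons.prems obtain c where c0: "c \<in> set cs"
    and c1: "x \<in> set (if ok (a @ [c]) then search ok cs ds (a @ [c]) else [])" by auto
  have c: "ok (a @ [c])" "x \<in> set (search ok cs ds (a @ [c]))" using c1 by (auto split: if_splits)
  note IH = Cons.IH[OF c(2)]
  have len: "length x = length a + length (d # ds)" using IH by simp
  have tk: "take (Suc (length a)) x = a @ [c]" using IH by simp
  have "take (length a) x = take (length a) (take (Suc (length a)) x)" by simp
  then have tk2: "take (length a) x = a" using tk by simp
  have "ok (take l x)" if "length a < l" "l \<le> length x" for l
  proof (cases "l = Suc (length a)")
    case True then show ?thesis using tk c(1) by simp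
  next
    case False then show ?thesis using IH that by simp
  qed
  then show ?case using len tk2 by blast
qed

fun idxs :: "('a \<Rightarrow> bool) \<Rightarrow> 'a list \<Rightarrow> nat \<Rightarrow> nat list" where
  "idxs P [] k = []"
| "idxs P (y # ys) k = (if P y then k # idxs P ys (Suc k) else idxs P ys (Suc k))"

lemma mem_idxs: "x \<in> set (idxs P ys k) \<longleftrightarrow> k \<le> x \<and> x - k < length ys \<and> P (ys ! (x - k))"
proof (induction ys arbitrary: k)
  case Nil then show ?case by simp
next
  case (Cons y ys)
  have "x \<in> set (idxs P (y # ys) k) \<longleftrightarrow> (P y \<and> x = k) \<or> x \<in> set (idxs P ys (Suc k))" by auto
  also have "\<dots> \<longleftrightarrow> k \<le> x \<and> x - k < length (y # ys) \<and> P ((y # ys) ! (x - k))"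
  proof (cases "x \<le> k")
    case True then show ?thesis using Cons.IH[of "Suc k"] by (cases "x = k") auto
  next
    case False
    then have "x - k = Suc (x - Suc k)" by simp
    then show ?thesis using Cons.IH[of "Suc k"] False by auto
  qed
  finally show ?case .
qed

lemma set_idxs0: "set (idxs P ys 0) = {i. i < length ys \<and> P (ys ! i)}"
  by (auto simp: mem_idxs)


definition Vok :: "int list list \<Rightarrow> bool" where
  "Vok V \<longleftrightarrow> distinct V \<and> (\<forall>x\<in>set V. length x = 8)"

lemma Vok_len: "Vok V \<Longrightarrow> i < length V \<Longrightarrow> length (V ! i) = 8"
  by (simp add: Vok_def)

lemma vinj: "Vok V \<Longrightarrow> i < length V \<Longrightarrow> j < length V \<Longrightarrow> vec (V ! i) = vec (V ! j) \<longleftrightarrow> i = j"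
  using vec_inj_iff[of "V ! i" "V ! j"] by (auto simp: Vok_def nth_eq_iff_index_eq)


definition Jof :: "int list list \<Rightarrow> bool list \<Rightarrow> (nat \<Rightarrow> int) set" where
  "Jof V m = {vec (V ! i) | i. i < length V \<and> m ! i}"

definition dnL :: "int list list \<Rightarrow> nat list list" where
  "dnL V = map (\<lambda>x. idxs (\<lambda>y. leL y x \<and> y \<noteq> x) V 0) V"

definition validI :: "nat list list \<Rightarrow> bool list \<Rightarrow> bool" where
  "validI DN m = (\<forall>i<length m. m ! i \<longrightarrow> (\<forall>j\<in>set (DN ! i). j < length m \<and> m ! j))"

lemma length_dnL[simp]: "length (dnL V) = length V" by (simp add: dnL_def)

lemma dnL_set: "i < length V \<Longrightarrow> set (dnL V ! i) = {j. j < length V \<and> leL (V ! j) (V ! i) \<and> V ! j \<noteq> V ! i}"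
  by (simp add: dnL_def set_idxs0)

lemma ideal_Jof:
  assumes V: "Vok V" and m: "length m = length V"
  shows "order_ideal (vec ` set V) (Jof V m) \<longleftrightarrow> validI (dnL V) m"
proof
  assume oi: "order_ideal (vec ` set V) (Jof V m)"
  show "validI (dnL V) m" unfolding validI_def
  proof (intro allI impI ballI conjI)
    fix i j assume i: "i < length m" "m ! i" and j: "j \<in> set (dnL V ! i)"
    have iV: "i < length V" using i m by simp
    have jj: "j < length V" "leL (V ! j) (V ! i)" using j dnL_set[OF iV] by auto
    then show "j < length m" using m by simp
    have "rle (vec (V ! j)) (vec (V ! i))" using jj iV rle_vec Vok_len[OF V] by simp
    moreover have "vec (V ! i) \<in> Jof V m" using iV i by (auto simp: Jof_def)
    moreover have "vec (V ! j) \<in> vec ` set V" using jj by simp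
    ultimately have "vec (V ! j) \<in> Jof V m" using oi unfolding order_ideal_def by blast
    then obtain k where k: "k < length V" "m ! k" "vec (V ! j) = vec (V ! k)" by (auto simp: Jof_def)
    then have "k = j" using vinj[OF V] jj by simp
    then show "m ! j" using k by simp
  qed
next
  assume vi: "validI (dnL V) m"
  show "order_ideal (vec ` set V) (Jof V m)" unfolding order_ideal_def
  proof (intro conjI ballI allI impI)
    show "Jof V m \<subseteq> vec ` set V" by (auto simp: Jof_def)
    fix x y assume x: "x \<in> Jof V m" and y: "y \<in> vec ` set V" and r: "rle y x"
    obtain i where i: "i < length V" "m ! i" "x = vec (V ! i)" using x by (auto simp: Jof_def)
    obtain j where j: "j < length V" "y = vec (V ! j)" using y by (auto simp: in_set_conv_nth)
    show "y \<in> Jof V m"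
    proof (cases "j = i")
      case True then show ?thesis using i j by (auto simp: Jof_def)
    next
      case False
      have "rle (vec (V ! j)) (vec (V ! i))" using r i(3) j(2) by simp
      then have "leL (V ! j) (V ! i)" using rle_vec Vok_len[OF V i(1)] Vok_len[OF V j(1)] by simp
      moreover have "V ! j \<noteq> V ! i" using False vinj[OF V i(1) j(1)] by metis
      ultimately have "j \<in> set (dnL V ! i)" using dnL_set[OF i(1)] j by simp
      moreover have "i < length m" using i(1) m by simp
      ultimately have "m ! j" using vi i(2) unfolding validI_def by blast
      then show ?thesis using j by (auto simp: Jof_def)
    qed
  qed
qed

lemma ideals_eq:
  assumes V: "Vok V"
  shows "ideals (vec ` set V) = Jof V ` {m. length m = length V \<and> validI (dnL V) m}"
proof
  show "Jof V ` {m. length m = length V \<and> validI (dnL V) m} \<subseteq> ideals (vec ` set V)"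
    using ideal_Jof[OF V] by (auto simp: ideals_def)
next
  show "ideals (vec ` set V) \<subseteq> Jof V ` {m. length m = length V \<and> validI (dnL V) m}"
  proof
    fix J assume "J \<in> ideals (vec ` set V)"
    then have oi: "order_ideal (vec ` set V) J" by (simp add: ideals_def)
    then have sub: "J \<subseteq> vec ` set V" by (simp add: order_ideal_def)
    define m where "m = map (\<lambda>x. vec x \<in> J) V"
    have lm: "length m = length V" by (simp add: m_def)
    have "Jof V m = J"
    proof
      show "Jof V m \<subseteq> J" by (auto simp: Jof_def m_def)
      show "J \<subseteq> Jof V m"
      proof
        fix b assume b: "b \<in> J"
        then have "b \<in> vec ` set V" using sub by blast
        then obtain x where x: "x \<in> set V" "b = vec x" by blast
        then obtain i where "i < length V" "V ! i = x" by (auto simp: in_set_conv_nth)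
        then have "i < length V" "b = vec (V ! i)" using x by auto
        then show "b \<in> Jof V m" using b by (auto simp: Jof_def m_def)
      qed
    qed
    then have JJ: "J = Jof V m" by simp
    have "validI (dnL V) m" using ideal_Jof[OF V lm] oi JJ by simp
    then have "m \<in> {m. length m = length V \<and> validI (dnL V) m}" using lm by simp
    then show "J \<in> Jof V ` {m. length m = length V \<and> validI (dnL V) m}" using JJ by (rule rev_image_eqI)
  qed
qed

definition okI :: "nat list list \<Rightarrow> bool list \<Rightarrow> bool" where
  "okI DN b = (b \<noteq> [] \<longrightarrow> last b \<longrightarrow> (\<forall>j\<in>set (DN ! (length b - 1)). j < length b - 1 \<and> b ! j))"

lemma valid_iff_ok:
  assumes lt: "\<forall>i<length DN. \<forall>j\<in>set (DN ! i). j < i" and lm: "length m = length DN"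
  shows "validI DN m \<longleftrightarrow> (\<forall>l. 0 < l \<and> l \<le> length m \<longrightarrow> okI DN (take l m))"
proof
  assume v: "validI DN m"
  show "\<forall>l. 0 < l \<and> l \<le> length m \<longrightarrow> okI DN (take l m)"
  proof (intro allI impI)
    fix l assume l: "0 < l \<and> l \<le> length m"
    have ne: "take l m \<noteq> []" using l by auto
    have last: "last (take l m) = m ! (l - 1)" using l ne by (simp add: last_conv_nth)
    show "okI DN (take l m)" unfolding okI_def
    proof (intro impI ballI)
      fix j assume "last (take l m)" and j: "j \<in> set (DN ! (length (take l m) - 1))"
      then have mi: "m ! (l - 1)" using last by simp
      have ll: "length (take l m) - 1 = l - 1" using l by simp
      have jj: "j \<in> set (DN ! (l - 1))" using j ll by simp
      have l1: "l - 1 < length DN" "l - 1 < length m" using l lm by auto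
      have "j < l - 1" using lt jj l1(1) by blast
      moreover have "m ! j" using v mi jj l1(2) unfolding validI_def by blast
      ultimately show "j < length (take l m) - 1 \<and> take l m ! j" using ll by simp
    qed
  qed
next
  assume ok: "\<forall>l. 0 < l \<and> l \<le> length m \<longrightarrow> okI DN (take l m)"
  show "validI DN m" unfolding validI_def
  proof (intro allI impI ballI)
    fix i j assume i: "i < length m" "m ! i" and j: "j \<in> set (DN ! i)"
    have o: "okI DN (take (Suc i) m)" using ok i by simp
    have ne: "take (Suc i) m \<noteq> []" using i by auto
    have "last (take (Suc i) m) = m ! i" using i ne by (simp add: last_conv_nth)
    moreover have "m \<noteq> []" using i by auto
    ultimately have "j < i \<and> take (Suc i) m ! j" using o i j unfolding okI_def by simp
    then have ji: "j < i" and tj: "take (Suc i) m ! j" by blast+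
    have "take (Suc i) m ! j = m ! j" using ji by simp
    then show "j < length m \<and> m ! j" using i ji tj by simp
  qed
qed

lemma ideals_search:
  assumes lt: "\<forall>i<length DN. \<forall>j\<in>set (DN ! i). j < i" and ln: "length DN = length V"
  shows "{m. length m = length V \<and> validI DN m} = set (search (okI DN) [False, True] V [])"
proof
  show "{m. length m = length V \<and> validI DN m} \<subseteq> set (search (okI DN) [False, True] V [])"
  proof
    fix m assume "m \<in> {m. length m = length V \<and> validI DN m}"
    then have m: "length m = length V" "validI DN m" by auto
    have ok: "\<forall>l. 0 < l \<and> l \<le> length m \<longrightarrow> okI DN (take l m)"
      using valid_iff_ok[OF lt] m ln by simp
    show "m \<in> set (search (okI DN) [False, True] V [])"
      by (rule search_complete) (use m ok in auto)
  qed
next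
  show "set (search (okI DN) [False, True] V []) \<subseteq> {m. length m = length V \<and> validI DN m}"
  proof
    fix m assume "m \<in> set (search (okI DN) [False, True] V [])"
    from search_sound[OF this] have "length m = length V" "\<forall>l. 0 < l \<and> l \<le> length m \<longrightarrow> okI DN (take l m)"
      by auto
    then show "m \<in> {m. length m = length V \<and> validI DN m}" using valid_iff_ok[OF lt] ln by simp
  qed
qed


definition cntL :: "bool list \<Rightarrow> nat list \<Rightarrow> nat \<Rightarrow> nat" where
  "cntL m a c = length (filter (\<lambda>p. fst p \<and> snd p = c) (zip m a))"

lemma cntL_card: "cntL m a c = card {i. i < length m \<and> i < length a \<and> m ! i \<and> a ! i = c}"
  unfolding cntL_def length_filter_conv_card by (intro arg_cong[where f = card]) auto

definition psiL :: "nat \<Rightarrow> nat list \<Rightarrow> bool list \<Rightarrow> int list" where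
  "psiL s a m = map (\<lambda>c. (if c = Suc s then 1 else 0) + int (cntL m a c)) [1,2,3,4,5,6,7,8]"

lemma length_psiL[simp]: "length (psiL s a m) = 8" by (simp add: psiL_def)

lemma vec_out: "k \<notin> {1..8} \<Longrightarrow> vec xs k = 0"
  by (auto simp: vec_def)

lemma map18_nth: "k \<in> {1..8} \<Longrightarrow> map f [1,2,3,4,5,6,7,8::nat] ! (k - 1) = f k"
proof -
  assume "k \<in> {1..8}"
  then have "k = 1 \<or> k = 2 \<or> k = 3 \<or> k = 4 \<or> k = 5 \<or> k = 6 \<or> k = 7 \<or> k = 8" by auto
  then show ?thesis by (elim disjE) simp_all
qed

lemma vec_psiL: "vec (psiL s a m) k = (if k \<in> {1..8} then (if k = Suc s then 1 else 0) + int (cntL m a k) else 0)"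
proof (cases "k \<in> {1..8}")
  case True
  then have "vec (psiL s a m) k = psiL s a m ! (k - 1)" by (simp add: vec_def)
  also have "\<dots> = (if k = Suc s then 1 else 0) + int (cntL m a k)" unfolding psiL_def using True by (rule map18_nth)
  finally have X: "vec (psiL s a m) k = (if k = Suc s then 1 else 0) + int (cntL m a k)" .
  show ?thesis using True by (simp only: X if_True)
next
  case False show ?thesis unfolding if_not_P[OF False] by (rule vec_out[OF False])
qed

lemma psi_eq:
  assumes V: "Vok V" and lm: "length m = length V" and a: "a = map (h \<circ> vec) V"
    and hr: "\<forall>x\<in>set V. h (vec x) \<in> {1..8}" and s: "s \<le> 7"
  shows "psi s h (Jof V m) = vec (psiL s a m)"
proof
  fix k
  define I where "I = {i. i < length V \<and> m ! i}"
  have J: "Jof V m = (\<lambda>i. vec (V ! i)) ` I" by (auto simp: Jof_def I_def)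
  have inj: "inj_on (\<lambda>i. vec (V ! i)) I" using vinj[OF V] by (auto simp: inj_on_def I_def)
  have ai: "i \<in> I \<Longrightarrow> h (vec (V ! i)) = a ! i" for i by (simp add: a I_def)
  have "(\<Sum>b\<in>Jof V m. simple (h b) k) = (\<Sum>i\<in>I. simple (h (vec (V ! i))) k)"
    unfolding J by (rule sum.reindex[OF inj, unfolded o_def])
  also have "\<dots> = (\<Sum>i\<in>I. if a ! i = k then 1 else 0)"
    by (intro sum.cong refl) (simp add: ai simple_def)
  also have "\<dots> = int (card {i \<in> I. a ! i = k})"
    by (simp add: sum.If_cases I_def Int_def conj_assoc)
  also have "{i \<in> I. a ! i = k} = {i. i < length m \<and> i < length a \<and> m ! i \<and> a ! i = k}"
    using lm by (auto simp: I_def a)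
  finally have S: "(\<Sum>b\<in>Jof V m. simple (h b) k) = int (cntL m a k)" by (simp add: cntL_card)
  show "psi s h (Jof V m) k = vec (psiL s a m) k"
  proof (cases "k \<in> {1..8}")
    case True
    then show ?thesis unfolding psi_def vec_psiL S by (simp add: simple_def)
  next
    case False
    have "{i. i < length m \<and> i < length a \<and> m ! i \<and> a ! i = k} = {}"
    proof -
      have "a ! i \<in> {1..8}" if "i < length a" for i using that hr by (simp add: a)
      then show ?thesis using False by blast
    qed
    then have "cntL m a k = 0" by (simp add: cntL_card)
    moreover have "k \<noteq> Suc s" using False s by auto
    ultimately show ?thesis unfolding psi_def vec_psiL S using False by (simp add: simple_def)
  qed
qed

lemma set18g: "{1,2,3,4,5,6,7,8::nat} = {1..8}" by auto

definition hadjL :: "int list \<Rightarrow> int list \<Rightarrow> bool" where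
  "hadjL x y = (\<exists>i\<in>{1,2,3,4,5,6,7,8::nat}. map2 (-) x y = unitL i \<or> map2 (-) y x = unitL i)"

lemma vec_diff: assumes "length x = 8" "length y = 8" shows "vec x k - vec y k = vec (map2 (-) x y) k"
proof (cases "k \<in> {1..8}")
  case True
  then have "k - 1 < 8" by auto
  then show ?thesis using True assms by (simp add: vec_def)
next
  case False then show ?thesis using vec_out[OF False, of x] vec_out[OF False, of y] vec_out[OF False, of "map2 (-) x y"] by simp
qed

lemma diff_simple:
  assumes x: "length x = 8" and y: "length y = 8" and i: "i \<in> {1..8}"
  shows "(\<forall>k. vec x k - vec y k = simple i k) \<longleftrightarrow> map2 (-) x y = unitL i"
proof -
  have "(\<forall>k. vec x k - vec y k = simple i k) \<longleftrightarrow> vec (map2 (-) x y) = vec (unitL i)"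
    unfolding vec_diff[OF x y] simple_vec[OF i] by (simp add: fun_eq_iff)
  also have "\<dots> \<longleftrightarrow> map2 (-) x y = unitL i" using x y by (intro vec_inj_iff) simp_all
  finally show ?thesis .
qed

lemma H_adj_vec: assumes x: "length x = 8" and y: "length y = 8" shows "H_adj (vec x) (vec y) \<longleftrightarrow> hadjL x y"
proof -
  have "H_adj (vec x) (vec y) \<longleftrightarrow> (\<exists>i\<in>{1..8}. map2 (-) x y = unitL i \<or> map2 (-) y x = unitL i)"
    unfolding H_adj_def using diff_simple[OF x y] diff_simple[OF y x] by blast
  also have "\<dots> \<longleftrightarrow> hadjL x y" unfolding hadjL_def by (simp only: set18g)
  finally show ?thesis .
qed

definition nbL :: "int list list \<Rightarrow> nat list list" where
  "nbL V = map (\<lambda>x. idxs (hadjL x) V 0) V"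

lemma length_nbL[simp]: "length (nbL V) = length V" by (simp add: nbL_def)

lemma nbL_set: "i < length V \<Longrightarrow> set (nbL V ! i) = {j. j < length V \<and> hadjL (V ! i) (V ! j)}"
  by (simp add: nbL_def set_idxs0)

lemma dyn_adj_iff: assumes "c \<in> {1..8}" shows "dyn_adj c z \<longleftrightarrow> z \<in> set (nbl c)"
proof -
  have "c = 1 \<or> c = 2 \<or> c = 3 \<or> c = 4 \<or> c = 5 \<or> c = 6 \<or> c = 7 \<or> c = 8" using assms by auto
  then show ?thesis by (elim disjE) (auto simp: dyn_adj_def gram_def E8_edges_def)
qed

definition nbs :: "nat \<Rightarrow> nat \<Rightarrow> nat list" where "nbs s c = filter (\<lambda>z. z \<le> s) (nbl c)"

lemma nbl_ge1: "z \<in> set (nbl c) \<Longrightarrow> 1 \<le> z"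
  by (auto split: if_splits)

lemma dyn_set: assumes "c \<in> {1..8}" shows "{z \<in> {1..s}. dyn_adj c z} = set (nbs s c)"
  using dyn_adj_iff[OF assms] nbl_ge1 by (auto simp: nbs_def)

definition OMI :: "nat \<Rightarrow> nat list list \<Rightarrow> nat list \<Rightarrow> bool" where
  "OMI s NB a = (\<forall>i<length a. 1 \<le> a ! i \<and> a ! i \<le> s \<and> (\<forall>j\<in>set (NB ! i). j < length a) \<and>
      set (map ((!) a) (NB ! i)) = set (nbs s (a ! i)))"


lemma S_conv: "b \<in> vec ` set V \<longleftrightarrow> (\<exists>i<length V. b = vec (V ! i))"
proof
  assume "b \<in> vec ` set V" then obtain x where "x \<in> set V" "b = vec x" by blast
  then show "\<exists>i<length V. b = vec (V ! i)" by (auto simp: in_set_conv_nth)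
next
  assume "\<exists>i<length V. b = vec (V ! i)"
  then obtain i where "i < length V" "b = vec (V ! i)" by blast
  then show "b \<in> vec ` set V" using nth_mem by blast
qed

lemma key_nb:
  assumes V: "Vok V" and i: "i < length V" and a: "a = map (h \<circ> vec) V"
  shows "h ` {y \<in> vec ` set V. H_adj (vec (V ! i)) y} = set (map ((!) a) (nbL V ! i))"
proof -
  have "{y \<in> vec ` set V. H_adj (vec (V ! i)) y} = (\<lambda>j. vec (V ! j)) ` set (nbL V ! i)"
  proof
    show "{y \<in> vec ` set V. H_adj (vec (V ! i)) y} \<subseteq> (\<lambda>j. vec (V ! j)) ` set (nbL V ! i)"
    proof
      fix y assume y: "y \<in> {y \<in> vec ` set V. H_adj (vec (V ! i)) y}"
      then obtain j where j: "j < length V" "y = vec (V ! j)" using S_conv by blast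
      have "hadjL (V ! i) (V ! j)" using y j H_adj_vec Vok_len[OF V i] Vok_len[OF V j(1)] by simp
      then have "j \<in> set (nbL V ! i)" using nbL_set[OF i] j by simp
      then show "y \<in> (\<lambda>j. vec (V ! j)) ` set (nbL V ! i)" using j by simp
    qed
    show "(\<lambda>j. vec (V ! j)) ` set (nbL V ! i) \<subseteq> {y \<in> vec ` set V. H_adj (vec (V ! i)) y}"
    proof
      fix y assume "y \<in> (\<lambda>j. vec (V ! j)) ` set (nbL V ! i)"
      then obtain j where j: "j \<in> set (nbL V ! i)" "y = vec (V ! j)" by blast
      have jj: "j < length V" "hadjL (V ! i) (V ! j)" using j(1) nbL_set[OF i] by auto
      have "H_adj (vec (V ! i)) y" using jj j(2) H_adj_vec Vok_len[OF V i] Vok_len[OF V jj(1)] by simp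
      moreover have "y \<in> vec ` set V" using jj(1) j(2) by simp
      ultimately show "y \<in> {y \<in> vec ` set V. H_adj (vec (V ! i)) y}" by simp
    qed
  qed
  then have "h ` {y \<in> vec ` set V. H_adj (vec (V ! i)) y} = (\<lambda>j. h (vec (V ! j))) ` set (nbL V ! i)"
    by (simp add: image_image)
  also have "\<dots> = (\<lambda>j. a ! j) ` set (nbL V ! i)"
  proof (rule image_cong[OF refl])
    fix j assume "j \<in> set (nbL V ! i)"
    then have "j < length V" using nbL_set[OF i] by auto
    then show "h (vec (V ! j)) = a ! j" by (simp add: a)
  qed
  also have "\<dots> = set (map ((!) a) (nbL V ! i))" by simp
  finally show ?thesis .
qed

lemma open_map_iff:
  assumes V: "Vok V" and a: "a = map (h \<circ> vec) V" and s: "s \<le> 8"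
  shows "open_map (vec ` set V) H_adj {1..s} dyn_adj h \<longleftrightarrow> OMI s (nbL V) a"
proof
  have la: "length a = length V" by (simp add: a)
  have ha: "i < length V \<Longrightarrow> h (vec (V ! i)) = a ! i" for i by (simp add: a)
  assume om: "open_map (vec ` set V) H_adj {1..s} dyn_adj h"
  show "OMI s (nbL V) a" unfolding OMI_def
  proof (intro allI impI conjI ballI)
    fix i assume i: "i < length a"
    then have iV: "i < length V" using la by simp
    have mem: "vec (V ! i) \<in> vec ` set V" using iV by simp
    have r: "h (vec (V ! i)) \<in> {1..s}" using om mem unfolding open_map_def by blast
    then show "1 \<le> a ! i" "a ! i \<le> s" using ha[OF iV] by auto
    fix j assume "j \<in> set (nbL V ! i)"
    then show "j < length a" using nbL_set[OF iV] la by auto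
  next
    fix i assume i: "i < length a"
    then have iV: "i < length V" using la by simp
    have mem: "vec (V ! i) \<in> vec ` set V" using iV by simp
    have r: "h (vec (V ! i)) \<in> {1..s}" using om mem unfolding open_map_def by blast
    have "h ` {y \<in> vec ` set V. H_adj (vec (V ! i)) y} = {z \<in> {1..s}. dyn_adj (h (vec (V ! i))) z}"
      using om mem unfolding open_map_def by blast
    then have "set (map ((!) a) (nbL V ! i)) = {z \<in> {1..s}. dyn_adj (a ! i) z}"
      using key_nb[OF V iV a] ha[OF iV] by simp
    also have "\<dots> = set (nbs s (a ! i))" using r ha[OF iV] s by (intro dyn_set) auto
    finally show "set (map ((!) a) (nbL V ! i)) = set (nbs s (a ! i))" .
  qed
next
  have la: "length a = length V" by (simp add: a)
  have ha: "i < length V \<Longrightarrow> h (vec (V ! i)) = a ! i" for i by (simp add: a)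
  assume om: "OMI s (nbL V) a"
  have r: "1 \<le> a ! i \<and> a ! i \<le> s" "set (map ((!) a) (nbL V ! i)) = set (nbs s (a ! i))" if "i < length V" for i
    using om that la unfolding OMI_def by auto
  have im: "h ` {y \<in> vec ` set V. H_adj (vec (V ! i)) y} = {z \<in> {1..s}. dyn_adj (h (vec (V ! i))) z}"
    if i: "i < length V" for i
  proof -
    have "a ! i \<in> {1..8}" using r(1)[OF i] s by auto
    then have "{z \<in> {1..s}. dyn_adj (a ! i) z} = set (nbs s (a ! i))" by (rule dyn_set)
    then show ?thesis using key_nb[OF V i a] r(2)[OF i] ha[OF i] by simp
  qed
  show "open_map (vec ` set V) H_adj {1..s} dyn_adj h" unfolding open_map_def
  proof (intro conjI ballI impI)
    fix x assume "x \<in> vec ` set V"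
    then obtain i where i: "i < length V" "x = vec (V ! i)" using S_conv by blast
    show "h x \<in> {1..s}" using r(1)[OF i(1)] ha[OF i(1)] i(2) by simp
    show "h ` {y \<in> vec ` set V. H_adj x y} = {z \<in> {1..s}. dyn_adj (h x) z}" using im[OF i(1)] i(2) by simp
    fix y assume y: "y \<in> vec ` set V" and e: "H_adj x y"
    have "h y \<in> h ` {y \<in> vec ` set V. H_adj x y}" using y e by blast
    then show "dyn_adj (h x) (h y)" using im[OF i(1)] i(2) by simp
  qed
qed

definition seteq :: "'a list \<Rightarrow> 'a list \<Rightarrow> bool" where
  "seteq xs ys = (list_all (\<lambda>x. x \<in> set ys) xs \<and> list_all (\<lambda>y. y \<in> set xs) ys)"

lemma seteq_iff: "seteq xs ys \<longleftrightarrow> set xs = set ys"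
  by (auto simp: seteq_def list_all_iff)

definition OMIc :: "nat \<Rightarrow> nat list list \<Rightarrow> nat list \<Rightarrow> bool" where
  "OMIc s NB a = (length NB = length a \<and> list_all (\<lambda>(nb, c). 1 \<le> c \<and> c \<le> s \<and> list_all (\<lambda>j. j < length a) nb \<and>
      seteq (map ((!) a) nb) (nbs s c)) (zip NB a))"

lemma OMIc_OMI: "OMIc s NB a \<Longrightarrow> OMI s NB a"
proof -
  assume c: "OMIc s NB a"
  show "OMI s NB a" unfolding OMI_def
  proof (intro allI impI)
    fix i assume i: "i < length a"
    have l: "length NB = length a" using c by (simp add: OMIc_def)
    have "(NB ! i, a ! i) \<in> set (zip NB a)" using i l by (metis in_set_conv_nth length_zip min.idem nth_zip)
    then have "(\<lambda>(nb, c). 1 \<le> c \<and> c \<le> s \<and> list_all (\<lambda>j. j < length a) nb \<and>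
      seteq (map ((!) a) nb) (nbs s c)) (NB ! i, a ! i)" using c unfolding OMIc_def list_all_iff by blast
    then show "1 \<le> a ! i \<and> a ! i \<le> s \<and> (\<forall>j\<in>set (NB ! i). j < length a) \<and>
      set (map ((!) a) (NB ! i)) = set (nbs s (a ! i))" by (simp add: seteq_iff list_all_iff)
  qed
qed


definition okG :: "nat \<Rightarrow> nat list list \<Rightarrow> nat list list \<Rightarrow> nat list \<Rightarrow> bool" where
  "okG s NB CMP b = (b \<noteq> [] \<longrightarrow> (let j = length b - 1; c = b ! j in 1 \<le> c \<and> c \<le> s \<and> (j = 0 \<longrightarrow> c = s) \<and>
     list_all (\<lambda>i. i < j \<longrightarrow> b ! i \<in> set (nbs s c)) (NB ! j) \<and>
     list_all (\<lambda>i. seteq (map ((!) b) (NB ! i)) (nbs s (b ! i))) (CMP ! j)))"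

lemma okG_sound:
  assumes om: "OMI s NB a" and a0: "a ! 0 = s"
    and cm: "\<forall>j<length a. \<forall>i\<in>set (CMP ! j). i \<le> j \<and> (\<forall>k\<in>set (NB ! i). k \<le> j)"
    and l: "0 < l" "l \<le> length a"
  shows "okG s NB CMP (take l a)"
proof -
  define b where "b = take l a"
  define j where "j = l - 1"
  have lb: "length b = l" using l by (simp add: b_def)
  have bj: "t < l \<Longrightarrow> b ! t = a ! t" for t by (simp add: b_def)
  have jl: "j < l" "j < length a" using l by (auto simp: j_def)
  have omj: "1 \<le> a ! j \<and> a ! j \<le> s \<and> (\<forall>k\<in>set (NB ! j). k < length a) \<and> set (map ((!) a) (NB ! j)) = set (nbs s (a ! j))"
    using om jl unfolding OMI_def by blast
  have c1: "1 \<le> b ! j \<and> b ! j \<le> s" using omj bj[OF jl(1)] by simp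
  have c2: "j = 0 \<longrightarrow> b ! j = s"
  proof
    assume "j = 0" then show "b ! j = s" using a0 bj[OF jl(1)] by simp
  qed
  have c3: "list_all (\<lambda>i. i < j \<longrightarrow> b ! i \<in> set (nbs s (b ! j))) (NB ! j)"
    unfolding list_all_iff
  proof (intro ballI impI)
    fix i assume i: "i \<in> set (NB ! j)" "i < j"
    have "a ! i \<in> set (map ((!) a) (NB ! j))" using i by simp
    then show "b ! i \<in> set (nbs s (b ! j))" using omj bj[OF jl(1)] bj[of i] i(2) jl by simp
  qed
  have c4: "list_all (\<lambda>i. seteq (map ((!) b) (NB ! i)) (nbs s (b ! i))) (CMP ! j)"
    unfolding list_all_iff
  proof
    fix i assume i: "i \<in> set (CMP ! j)"
    have ij: "i \<le> j" "\<forall>k\<in>set (NB ! i). k \<le> j" using cm jl(2) i by auto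
    have il: "i < length a" using ij jl by simp
    have omi: "set (map ((!) a) (NB ! i)) = set (nbs s (a ! i))" using om il unfolding OMI_def by blast
    have "map ((!) b) (NB ! i) = map ((!) a) (NB ! i)"
    proof (rule map_cong[OF refl])
      fix k assume "k \<in> set (NB ! i)"
      then have "k < l" using ij jl by fastforce
      then show "b ! k = a ! k" by (rule bj)
    qed
    moreover have "b ! i = a ! i" using ij jl by (intro bj) simp
    ultimately show "seteq (map ((!) b) (NB ! i)) (nbs s (b ! i))" using omi by (simp add: seteq_iff)
  qed
  have "b \<noteq> []" using lb l by auto
  moreover have "length b - 1 = j" using lb by (simp add: j_def)
  ultimately show ?thesis using c1 c2 c3 c4 unfolding okG_def b_def[symmetric] Let_def by simp
qed

definition okH :: "nat \<Rightarrow> (int list \<Rightarrow> bool) \<Rightarrow> bool list list list \<Rightarrow> nat list \<Rightarrow> bool" where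
  "okH s Q NEWI b = (b \<noteq> [] \<longrightarrow> (let j = length b - 1; c = b ! j in 1 \<le> c \<and> c \<le> s \<and>
     list_all (\<lambda>m. Q (psiL s b m)) (NEWI ! j)))"

lemma psiL_take:
  assumes "\<forall>i. l \<le> i \<and> i < length m \<longrightarrow> \<not> m ! i"
  shows "psiL s (take l a) m = psiL s a m"
proof -
  have "cntL m (take l a) c = cntL m a c" for c
  proof -
    have "{i. i < length m \<and> i < length (take l a) \<and> m ! i \<and> take l a ! i = c} =
          {i. i < length m \<and> i < length a \<and> m ! i \<and> a ! i = c}"
    proof (intro Collect_cong iffI)
      fix i assume i: "i < length m \<and> i < length (take l a) \<and> m ! i \<and> take l a ! i = c"
      then have "i < l" by simp
      then have "take l a ! i = a ! i" by simp
      then show "i < length m \<and> i < length a \<and> m ! i \<and> a ! i = c" using i by simp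
    next
      fix i assume i: "i < length m \<and> i < length a \<and> m ! i \<and> a ! i = c"
      then have "i < l" using assms by (meson not_le)
      then show "i < length m \<and> i < length (take l a) \<and> m ! i \<and> take l a ! i = c" using i by simp
    qed
    then show ?thesis by (simp add: cntL_card)
  qed
  then show ?thesis by (simp add: psiL_def)
qed

lemma okH_sound:
  assumes r: "\<forall>i<length a. 1 \<le> a ! i \<and> a ! i \<le> s" and q: "\<forall>m\<in>set IL. Q (psiL s a m)"
    and nw: "\<forall>j<length a. \<forall>m\<in>set (NEWI ! j). m \<in> set IL \<and> (\<forall>i. j < i \<and> i < length m \<longrightarrow> \<not> m ! i)"
    and l: "0 < l" "l \<le> length a"
  shows "okH s Q NEWI (take l a)"
proof -
  define b where "b = take l a"
  define j where "j = l - 1"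
  have lb: "length b = l" using l by (simp add: b_def)
  have jl: "j < l" "j < length a" using l by (auto simp: j_def)
  have bj: "b ! j = a ! j" using jl by (simp add: b_def)
  have c1: "1 \<le> b ! j \<and> b ! j \<le> s" using r jl bj by simp
  have c2: "list_all (\<lambda>m. Q (psiL s b m)) (NEWI ! j)" unfolding list_all_iff
  proof
    fix m assume m: "m \<in> set (NEWI ! j)"
    have m1: "m \<in> set IL" "\<forall>i. j < i \<and> i < length m \<longrightarrow> \<not> m ! i" using nw jl(2) m by auto
    have "\<forall>i. l \<le> i \<and> i < length m \<longrightarrow> \<not> m ! i" using m1(2) jl(1) by (simp add: j_def)
    then have "psiL s b m = psiL s a m" unfolding b_def by (rule psiL_take)
    then show "Q (psiL s b m)" using q m1(1) by simp
  qed
  have "b \<noteq> []" using lb l by auto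
  moreover have "length b - 1 = j" using lb by (simp add: j_def)
  ultimately show ?thesis using c1 c2 unfolding okH_def b_def[symmetric] Let_def by simp
qed


fun dnok :: "nat \<Rightarrow> nat list list \<Rightarrow> bool" where
  "dnok k [] = True"
| "dnok k (l # ls) = (list_all (\<lambda>j. j < k) l \<and> dnok (Suc k) ls)"

lemma dnok_D: "dnok k DN \<Longrightarrow> i < length DN \<Longrightarrow> j \<in> set (DN ! i) \<Longrightarrow> j < k + i"
proof (induction DN arbitrary: k i)
  case Nil then show ?case by simp
next
  case (Cons l ls)
  show ?case
  proof (cases i)
    case 0 then show ?thesis using Cons.prems by (simp add: list_all_iff)
  next
    case (Suc i')
    then have "j < Suc k + i'" using Cons.IH[of "Suc k" i'] Cons.prems by simp
    then show ?thesis using Suc by simp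
  qed
qed

fun cmpok :: "nat \<Rightarrow> nat list list \<Rightarrow> nat list list \<Rightarrow> bool" where
  "cmpok k NB [] = True"
| "cmpok k NB (c # cs) = (list_all (\<lambda>i. i \<le> k \<and> list_all (\<lambda>t. t \<le> k) (NB ! i)) c \<and> cmpok (Suc k) NB cs)"

lemma cmpok_D: "cmpok k NB CMP \<Longrightarrow> j < length CMP \<Longrightarrow> i \<in> set (CMP ! j) \<Longrightarrow> i \<le> k + j \<and> (\<forall>t\<in>set (NB ! i). t \<le> k + j)"
proof (induction CMP arbitrary: k j)
  case Nil then show ?case by simp
next
  case (Cons c cs)
  show ?case
  proof (cases j)
    case 0 then show ?thesis using Cons.prems by (simp add: list_all_iff)
  next
    case (Suc j')
    then have "i \<le> Suc k + j' \<and> (\<forall>t\<in>set (NB ! i). t \<le> Suc k + j')" using Cons.IH[of "Suc k" j'] Cons.prems by simp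
    then show ?thesis using Suc by simp
  qed
qed

fun nwok :: "nat \<Rightarrow> bool list list list \<Rightarrow> bool list list \<Rightarrow> bool" where
  "nwok k [] IL = True"
| "nwok k (ms # r) IL = (list_all (\<lambda>m. m \<in> set IL \<and> list_all Not (drop (Suc k) m)) ms \<and> nwok (Suc k) r IL)"

lemma nwok_D: "nwok k NW IL \<Longrightarrow> j < length NW \<Longrightarrow> m \<in> set (NW ! j) \<Longrightarrow> m \<in> set IL \<and> (\<forall>i. k + j < i \<and> i < length m \<longrightarrow> \<not> m ! i)"
proof (induction NW arbitrary: k j)
  case Nil then show ?case by simp
next
  case (Cons ms r)
  show ?case
  proof (cases j)
    case 0
    have A: "\<forall>m\<in>set ms. m \<in> set IL \<and> (\<forall>x\<in>set (drop (Suc k) m). \<not> x)"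
      using Cons.prems(1) unfolding nwok.simps list_all_iff by blast
    have ms: "m \<in> set ms" using Cons.prems(3) 0 by simp
    have m: "m \<in> set IL" "\<forall>x\<in>set (drop (Suc k) m). \<not> x" using A ms by blast+
    have "\<not> m ! i" if "k < i" "i < length m" for i
    proof -
      have "drop (Suc k) m ! (i - Suc k) = m ! i" using that by simp
      moreover have "i - Suc k < length (drop (Suc k) m)" using that by simp
      ultimately show ?thesis using m(2) by (metis nth_mem)
    qed
    then show ?thesis using m 0 by simp
  next
    case (Suc j')
    then have "m \<in> set IL \<and> (\<forall>i. Suc k + j' < i \<and> i < length m \<longrightarrow> \<not> m ! i)" using Cons.IH[of "Suc k" j'] Cons.prems by simp
    then show ?thesis using Suc by simp
  qed
qed

definition subB :: "bool list \<Rightarrow> bool list \<Rightarrow> bool" where "subB m m2 = list_all2 (\<lambda>x y. x \<longrightarrow> y) m m2"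

lemma list_all_zip_map: "list_all P (zip xs (map f xs)) \<longleftrightarrow> list_all (\<lambda>x. P (x, f x)) xs"
  by (induction xs) auto

lemma Jof_sub:
  assumes V: "Vok V" and l: "length m = length V" "length m2 = length V"
  shows "Jof V m \<subseteq> Jof V m2 \<longleftrightarrow> subB m m2"
proof
  assume sub: "Jof V m \<subseteq> Jof V m2"
  have "m2 ! i" if i: "i < length V" "m ! i" for i
  proof -
    have "vec (V ! i) \<in> Jof V m" using i by (auto simp: Jof_def)
    then have "vec (V ! i) \<in> Jof V m2" using sub by blast
    then obtain k where k: "k < length V" "m2 ! k" "vec (V ! i) = vec (V ! k)" by (auto simp: Jof_def)
    then have "k = i" using vinj[OF V i(1) k(1)] by simp
    then show ?thesis using k by simp
  qed
  then show "subB m m2" using l by (simp add: subB_def list_all2_conv_all_nth)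
next
  assume "subB m m2"
  then have "\<forall>i<length V. m ! i \<longrightarrow> m2 ! i" using l by (simp add: subB_def list_all2_conv_all_nth)
  then show "Jof V m \<subseteq> Jof V m2" by (auto simp: Jof_def)
qed


lemma main_generic:
  fixes s :: nat and V T :: "int list list" and NB DN CMP :: "nat list list" and AA CS :: "nat list"
    and IL :: "bool list list" and PS :: "int list list" and NW :: "bool list list list"
  assumes S: "stratum s = vec ` set V" and Tg: "target s = vec ` set T"
    and s: "1 \<le> s" "s \<le> 7"
    and Vk: "Vok V" and V0: "V \<noteq> []" "V ! 0 = unitL s"
    and TP: "set T \<subseteq> set PL"
    and CSs: "set CS = {1..s}"
    and NBd: "nbL V = NB" and DNd: "dnL V = DN"
    and DNlt: "dnok 0 DN"
    and CMPok: "cmpok 0 NB CMP" "length CMP = length V"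
    and G: "search (okG s NB CMP) CS V [] = [AA]"
    and OM: "OMIc s NB AA"
    and I: "search (okI DN) [False, True] V [] = IL"
    and P: "map (psiL s AA) IL = PS" and PT: "seteq PS T"
    and ORD: "list_all (\<lambda>(m, p). list_all (\<lambda>(m2, p2). subB m m2 = leL p p2) (zip IL PS)) (zip IL PS)"
    and H: "search (okH s (\<lambda>x. formL x = 2) NW) CS V [] = [AA]"
    and NWok: "nwok 0 NW IL" "length NW = length V"
  shows "poset_iso_onto s (hS s) (target s) \<and>
         (\<forall>h. h \<in> stratum s \<rightarrow> {1..s} \<and> poset_iso_onto s h (target s)
              \<longrightarrow> (\<forall>b\<in>stratum s. h b = hS s b))"
proof -
  define n where "n = length V"
  have lenV: "\<And>i. i < n \<Longrightarrow> length (V ! i) = 8" using Vok_len[OF Vk] by (simp add: n_def)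
  have Sc: "b \<in> stratum s \<longleftrightarrow> (\<exists>i<n. b = vec (V ! i))" for b unfolding S n_def by (rule S_conv)
  have wS: "i < n \<Longrightarrow> vec (V ! i) \<in> stratum s" for i using Sc by blast
  have AAs: "AA \<in> set (search (okG s NB CMP) CS V [])" using G by simp
  from search_sound[OF AAs] have lenAA: "length AA = n" and okAA: "\<forall>l. 0 < l \<and> l \<le> length AA \<longrightarrow> okG s NB CMP (take l AA)"
    by (auto simp: n_def)
  have AA0: "AA ! 0 = s"
  proof -
    have "n \<noteq> 0" using V0 by (simp add: n_def)
    then have "okG s NB CMP (take 1 AA)" using okAA lenAA by simp
    moreover have "take 1 AA \<noteq> []"
    proof
      assume "take 1 AA = []"
      then have "AA = []" by simp
      then show False using lenAA \<open>n \<noteq> 0\<close> by simp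
    qed
    moreover have "take 1 AA ! 0 = AA ! 0" by simp
    moreover have "length (take 1 AA) - 1 = 0" using lenAA \<open>n \<noteq> 0\<close> by simp
    ultimately show ?thesis unfolding okG_def Let_def by simp
  qed
  have OMA: "OMI s NB AA" using OM by (rule OMIc_OMI)
  have AAr: "i < n \<Longrightarrow> 1 \<le> AA ! i \<and> AA ! i \<le> s" for i using OMA lenAA unfolding OMI_def by simp
  define h0 where "h0 = restrict (\<lambda>b. the (map_of (zip V AA) (map b [1..<9]))) (stratum s)"
  have h0w: "h0 (vec (V ! i)) = AA ! i" if i: "i < n" for i
  proof -
    have "map (vec (V ! i)) [1..<9] = V ! i" using lenV[OF i] by (rule to_list)
    moreover have "map_of (zip V AA) (V ! i) = Some (AA ! i)"
      using Vk lenAA i by (intro map_of_zip_nth) (auto simp: Vok_def n_def)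
    ultimately show ?thesis using wS[OF i] by (simp add: h0_def)
  qed
  have mapAA: "map (h0 \<circ> vec) V = AA"
    by (rule nth_equalityI) (simp_all add: lenAA n_def h0w)
  have simple_s: "simple s = vec (V ! 0)" using V0 s by (simp add: simple_vec)
  have n0: "0 < n" using V0 by (simp add: n_def)
  have ish0: "is_hs s h0"
  proof -
    have "h0 \<in> stratum s \<rightarrow>\<^sub>E {1..s}"
    proof -
      have "\<forall>b\<in>stratum s. the (map_of (zip V AA) (map b [1..<9])) \<in> {1..s}"
      proof
        fix b assume "b \<in> stratum s"
        then obtain i where i: "i < n" "b = vec (V ! i)" using Sc by blast
        have "h0 b = AA ! i" using h0w[OF i(1)] i(2) by simp
        then have "h0 b \<in> {1..s}" using AAr[OF i(1)] by simp
        then show "the (map_of (zip V AA) (map b [1..<9])) \<in> {1..s}" using \<open>b \<in> stratum s\<close> by (simp add: h0_def)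
      qed
      then show ?thesis unfolding h0_def by (simp add: restrict_PiE_iff)
    qed
    moreover have "h0 (simple s) = s" using simple_s h0w[OF n0] AA0 by simp
    moreover have "open_map (stratum s) H_adj {1..s} dyn_adj h0"
      unfolding S using open_map_iff[OF Vk mapAA[symmetric]] OMA NBd s by simp
    ultimately show ?thesis by (simp add: is_hs_def)
  qed
  have uniq: "h = h0" if hh: "is_hs s h" for h
  proof -
    define a where "a = map (h \<circ> vec) V"
    have la: "length a = n" by (simp add: a_def n_def)
    have ai: "i < n \<Longrightarrow> a ! i = h (vec (V ! i))" for i by (simp add: a_def n_def)
    have om: "open_map (vec ` set V) H_adj {1..s} dyn_adj h" using hh S by (simp add: is_hs_def)
    then have OMa: "OMI s NB a" using open_map_iff[OF Vk a_def] NBd s by simp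
    have a0: "a ! 0 = s" using ai[OF n0] simple_s hh by (simp add: is_hs_def)
    have cm: "\<forall>j<length a. \<forall>i\<in>set (CMP ! j). i \<le> j \<and> (\<forall>k\<in>set (NB ! i). k \<le> j)"
      using cmpok_D[OF CMPok(1)] CMPok(2) la by (simp add: n_def)
    have "a \<in> set (search (okG s NB CMP) CS V [])"
    proof (rule search_complete)
      show "length a = length [] + length V" using la by (simp add: n_def)
      show "take (length []) a = []" by simp
      show "set a \<subseteq> set CS"
      proof
        fix x assume "x \<in> set a"
        then obtain i where "i < length a" "x = a ! i" by (auto simp: in_set_conv_nth)
        then show "x \<in> set CS" using OMa CSs unfolding OMI_def by auto
      qed
      show "\<forall>l. length [] < l \<and> l \<le> length a \<longrightarrow> okG s NB CMP (take l a)"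
        using okG_sound[OF OMa a0 cm] by simp
    qed
    then have aA: "a = AA" using G by simp
    show "h = h0"
    proof
      fix b
      show "h b = h0 b"
      proof (cases "b \<in> stratum s")
        case True
        then obtain i where i: "i < n" "b = vec (V ! i)" using Sc by blast
        then show ?thesis using h0w[OF i(1)] ai[OF i(1)] aA by simp
      next
        case False
        have "h \<in> stratum s \<rightarrow>\<^sub>E {1..s}" using hh by (simp add: is_hs_def)
        then have "h b = undefined" using False by (simp add: PiE_def extensional_def)
        moreover have "h0 b = undefined" using False by (simp add: h0_def)
        ultimately show ?thesis by simp
      qed
    qed
  qed
  have hS0: "hS s = h0" unfolding hS_def using ish0 uniq by (rule the_equality)
  have DNlt': "\<forall>i<length DN. \<forall>j\<in>set (DN ! i). j < i" using dnok_D[OF DNlt] by simp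
  have lenDN: "length DN = length V" using DNd by auto
  have idl: "ideals (stratum s) = Jof V ` set IL"
    unfolding S ideals_eq[OF Vk] DNd ideals_search[OF DNlt' lenDN] I ..
  have lenIL: "m \<in> set IL \<Longrightarrow> length m = n" for m
    using search_sound[of m "okI DN" "[False, True]" V "[]"] I by (simp add: n_def)
  have psi0: "m \<in> set IL \<Longrightarrow> psi s h0 (Jof V m) = vec (psiL s AA m)" for m
  proof -
    assume m: "m \<in> set IL"
    have "\<forall>x\<in>set V. h0 (vec x) \<in> {1..8}"
    proof
      fix x assume "x \<in> set V"
      then obtain i where "i < n" "x = V ! i" by (auto simp: in_set_conv_nth n_def)
      then show "h0 (vec x) \<in> {1..8}" using h0w AAr s by fastforce
    qed
    then show ?thesis using psi_eq[OF Vk _ mapAA[symmetric]] lenIL[OF m] s by (simp add: n_def)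
  qed
  have ordL: "\<forall>m\<in>set IL. \<forall>m2\<in>set IL. subB m m2 = leL (psiL s AA m) (psiL s AA m2)"
    using ORD unfolding P[symmetric] list_all_zip_map by (simp add: list_all_iff)
  have ordJ: "Jof V m \<subseteq> Jof V m2 \<longleftrightarrow> rle (psi s h0 (Jof V m)) (psi s h0 (Jof V m2))"
    if m: "m \<in> set IL" "m2 \<in> set IL" for m m2
  proof -
    have "Jof V m \<subseteq> Jof V m2 \<longleftrightarrow> subB m m2" using Jof_sub[OF Vk] lenIL m by (simp add: n_def)
    also have "\<dots> \<longleftrightarrow> leL (psiL s AA m) (psiL s AA m2)" using ordL m by blast
    also have "\<dots> \<longleftrightarrow> rle (vec (psiL s AA m)) (vec (psiL s AA m2))" by (simp add: rle_vec)
    finally show ?thesis using psi0 m by simp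
  qed
  have lenT: "x \<in> set T \<Longrightarrow> length x = 8" for x using TP PLb by blast
  have part1: "poset_iso_onto s h0 (target s)"
    unfolding poset_iso_onto_def idl
  proof (intro conjI)
    show ord: "\<forall>J\<in>Jof V ` set IL. \<forall>J'\<in>Jof V ` set IL. J \<subseteq> J' \<longleftrightarrow> rle (psi s h0 J) (psi s h0 J')"
      using ordJ by blast
    show "bij_betw (psi s h0) (Jof V ` set IL) (target s)"
    proof (rule bij_betw_imageI)
      show "inj_on (psi s h0) (Jof V ` set IL)"
      proof (rule inj_onI)
        fix J J' assume J: "J \<in> Jof V ` set IL" and J': "J' \<in> Jof V ` set IL" and e: "psi s h0 J = psi s h0 J'"
        have "rle (psi s h0 J) (psi s h0 J')" "rle (psi s h0 J') (psi s h0 J)" using e by (simp_all add: rle_def)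
        then have "J \<subseteq> J'" "J' \<subseteq> J" using ord J J' by blast+
        then show "J = J'" by blast
      qed
      have "psi s h0 ` (Jof V ` set IL) = vec ` (psiL s AA ` set IL)"
        using psi0 by (auto simp: image_image intro!: image_cong)
      also have "\<dots> = vec ` set PS" using P by auto
      also have "\<dots> = vec ` set T" using PT by (simp add: seteq_iff)
      finally show "psi s h0 ` (Jof V ` set IL) = target s" using Tg by simp
    qed
  qed
  have part2: "\<forall>b\<in>stratum s. h b = hS s b" if hh: "h \<in> stratum s \<rightarrow> {1..s}" "poset_iso_onto s h (target s)" for h
  proof -
    define a where "a = map (h \<circ> vec) V"
    have la: "length a = n" by (simp add: a_def n_def)
    have ai: "i < n \<Longrightarrow> a ! i = h (vec (V ! i))" for i by (simp add: a_def n_def)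
    have ar: "i < n \<Longrightarrow> 1 \<le> a ! i \<and> a ! i \<le> s" for i using hh(1) wS ai by fastforce
    have hr: "\<forall>x\<in>set V. h (vec x) \<in> {1..8}"
    proof
      fix x assume "x \<in> set V"
      then have "vec x \<in> stratum s" using S by simp
      then have "h (vec x) \<in> {1..s}" by (rule funcset_mem[OF hh(1)])
      then show "h (vec x) \<in> {1..8}" using s by simp
    qed
    have bij: "bij_betw (psi s h) (ideals (stratum s)) (target s)" using hh(2) by (simp add: poset_iso_onto_def)
    have q: "\<forall>m\<in>set IL. formL (psiL s a m) = 2"
    proof
      fix m assume m: "m \<in> set IL"
      have "Jof V m \<in> ideals (stratum s)" using idl m by simp
      then have "psi s h (Jof V m) \<in> psi s h ` ideals (stratum s)" by (rule imageI)
      then have "psi s h (Jof V m) \<in> target s" using bij by (simp add: bij_betw_def)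
      moreover have "psi s h (Jof V m) = vec (psiL s a m)" using psi_eq[OF Vk _ a_def hr] lenIL[OF m] s by (simp add: n_def)
      ultimately obtain t where t: "t \<in> set T" "vec (psiL s a m) = vec t" using Tg by auto
      then have "psiL s a m = t" using lenT[OF t(1)] by (intro vec_inj) simp_all
      moreover have "formL t = 2" using formL_PL TP t(1) by (auto simp: list_all_iff)
      ultimately show "formL (psiL s a m) = 2" by simp
    qed
    have nw: "\<forall>j<length a. \<forall>m\<in>set (NW ! j). m \<in> set IL \<and> (\<forall>i. j < i \<and> i < length m \<longrightarrow> \<not> m ! i)"
      using nwok_D[OF NWok(1)] NWok(2) la by (simp add: n_def)
    have "a \<in> set (search (okH s (\<lambda>x. formL x = 2) NW) CS V [])"
    proof (rule search_complete)
      show "length a = length [] + length V" using la by (simp add: n_def)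
      show "take (length []) a = []" by simp
      show "set a \<subseteq> set CS"
      proof
        fix x assume "x \<in> set a"
        then obtain i where "i < length a" "x = a ! i" by (auto simp: in_set_conv_nth)
        then show "x \<in> set CS" using ar la CSs by auto
      qed
      show "\<forall>l. length [] < l \<and> l \<le> length a \<longrightarrow> okH s (\<lambda>x. formL x = 2) NW (take l a)"
        using okH_sound[of a s IL "\<lambda>x. formL x = 2" NW] ar la q nw by simp
    qed
    then have aA: "a = AA" using H by simp
    show ?thesis
    proof
      fix b assume "b \<in> stratum s"
      then obtain i where i: "i < n" "b = vec (V ! i)" using Sc by blast
      then show "h b = hS s b" using hS0 h0w[OF i(1)] ai[OF i(1)] aA by simp
    qed
  qed
  show ?thesis using part1 part2 hS0 by simp
qed

definition NB3 :: "nat list list" where "NB3 = [[2],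
    [],
    [0]]"

definition DN3 :: "nat list list" where "DN3 = [[],
    [],
    [0]]"

definition CMP3 :: "nat list list" where "CMP3 = [[],
    [1],
    [0,2]]"

definition AA3 :: "nat list" where "AA3 = [3,2,1]"

definition IL3 :: "bool list list" where "IL3 = [[False,False,False],
    [False,True,False],
    [True,False,False],
    [True,False,True],
    [True,True,False],
    [True,True,True]]"

definition PS3 :: "int list list" where "PS3 = [[0,0,0,1,0,0,0,0],
    [0,1,0,1,0,0,0,0],
    [0,0,1,1,0,0,0,0],
    [1,0,1,1,0,0,0,0],
    [0,1,1,1,0,0,0,0],
    [1,1,1,1,0,0,0,0]]"

definition NW3 :: "bool list list list" where "NW3 = [[[True,False,False]],
   [[False,True,False],
    [True,True,False]],
   [[True,False,True],
    [True,True,True]]]"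

lemma c3_vok: "Vok SL3"
  by (simp add: Vok_def SL3_def)

lemma c3_ne: "SL3 \<noteq> []"
  by (simp add: SL3_def)

lemma c3_v0: "SL3 ! 0 = unitL 3"
  by (simp add: SL3_def unitL_def)

lemma c3_tp: "set SL4 \<subseteq> set PL"
  unfolding f4[symmetric] by auto

lemma c3_cs: "set [1,2,3] = {1..3::nat}"
  by (auto; presburger)

lemma c3_nb: "nbL SL3 = NB3"
  by (simp add: nbL_def SL3_def NB3_def hadjL_def unitL_def)

lemma c3_dn: "dnL SL3 = DN3"
  by (simp add: dnL_def SL3_def DN3_def leL_def)

lemma c3_dnok: "dnok 0 DN3"
  by (simp add: DN3_def)

lemma c3_cmpok: "cmpok 0 NB3 CMP3"
  by (simp add: NB3_def CMP3_def)

lemma c3_cmplen: "length CMP3 = length SL3"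
  by (simp add: CMP3_def SL3_def)

lemma c3_G: "search (okG 3 NB3 CMP3) [1,2,3] SL3 [] = [AA3]"
  by (simp add: okG_def SL3_def NB3_def CMP3_def AA3_def seteq_def nbs_def)

lemma c3_om: "OMIc 3 NB3 AA3"
  by (simp add: OMIc_def NB3_def AA3_def seteq_def nbs_def)

lemma c3_I: "search (okI DN3) [False, True] SL3 [] = IL3"
  by (simp add: okI_def SL3_def DN3_def IL3_def)

lemma c3_P: "map (psiL 3 AA3) IL3 = PS3"
  by (simp add: psiL_def cntL_def AA3_def IL3_def PS3_def)

lemma c3_PT: "seteq PS3 SL4"
  by (simp add: seteq_def PS3_def SL4_def)

lemma c3_ord: "list_all (\<lambda>(m, p). list_all (\<lambda>(m2, p2). subB m m2 = leL p p2) (zip IL3 PS3)) (zip IL3 PS3)"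
  by (simp add: subB_def leL_def IL3_def PS3_def)

lemma c3_H: "search (okH 3 (\<lambda>x. formL x = 2) NW3) [1,2,3] SL3 [] = [AA3]"
  by (simp add: okH_def SL3_def NW3_def AA3_def psiL_def cntL_def formL_def fsL_def)

lemma c3_nw: "nwok 0 NW3 IL3"
  by (simp add: NW3_def IL3_def)

lemma c3_nwlen: "length NW3 = length SL3"
  by (simp add: NW3_def SL3_def)

lemma inst3: "poset_iso_onto 3 (hS 3) (target 3) \<and>
         (\<forall>h. h \<in> stratum 3 \<rightarrow> {1..3} \<and> poset_iso_onto 3 h (target 3)
              \<longrightarrow> (\<forall>b\<in>stratum 3. h b = hS 3 b))"
  by (rule main_generic[OF stratum3 target3 _ _ c3_vok c3_ne c3_v0 c3_tp c3_cs c3_nb c3_dn c3_dnok c3_cmpok c3_cmplen c3_G c3_om c3_I c3_P c3_PT c3_ord c3_H c3_nw c3_nwlen]) simp_all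

definition NB4 :: "nat list list" where "NB4 = [[1,2],
    [0,3,4],
    [0,3],
    [1,2,5],
    [1,5],
    [3,4]]"

definition DN4 :: "nat list list" where "DN4 = [[],
    [0],
    [0],
    [0,1,2],
    [0,1],
    [0,1,2,3,4]]"

definition CMP4 :: "nat list list" where "CMP4 = [[],
    [],
    [0],
    [2],
    [1],
    [3,4,5]]"

definition AA4 :: "nat list" where "AA4 = [4,3,2,4,1,3]"

definition IL4 :: "bool list list" where "IL4 = [[False,False,False,False,False,False],
    [True,False,False,False,False,False],
    [True,False,True,False,False,False],
    [True,True,False,False,False,False],
    [True,True,False,False,True,False],
    [True,True,True,False,False,False],
    [True,True,True,False,True,False],
    [True,True,True,True,False,False],
    [True,True,True,True,True,False],
    [True,True,True,True,True,True]]"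

definition PS4 :: "int list list" where "PS4 = [[0,0,0,0,1,0,0,0],
    [0,0,0,1,1,0,0,0],
    [0,1,0,1,1,0,0,0],
    [0,0,1,1,1,0,0,0],
    [1,0,1,1,1,0,0,0],
    [0,1,1,1,1,0,0,0],
    [1,1,1,1,1,0,0,0],
    [0,1,1,2,1,0,0,0],
    [1,1,1,2,1,0,0,0],
    [1,1,2,2,1,0,0,0]]"

definition NW4 :: "bool list list list" where "NW4 = [[[True,False,False,False,False,False]],
   [[True,True,False,False,False,False]],
   [[True,False,True,False,False,False],
    [True,True,True,False,False,False]],
   [[True,True,True,True,False,False]],
   [[True,True,False,False,True,False],
    [True,True,True,False,True,False],
    [True,True,True,True,True,False]],
   [[True,True,True,True,True,True]]]"

lemma c4_vok: "Vok SL4"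
  by (simp add: Vok_def SL4_def)

lemma c4_ne: "SL4 \<noteq> []"
  by (simp add: SL4_def)

lemma c4_v0: "SL4 ! 0 = unitL 4"
  by (simp add: SL4_def unitL_def)

lemma c4_tp: "set SL5 \<subseteq> set PL"
  unfolding f5[symmetric] by auto

lemma c4_cs: "set [1,2,3,4] = {1..4::nat}"
  by (auto; presburger)

lemma c4_nb: "nbL SL4 = NB4"
  by (simp add: nbL_def SL4_def NB4_def hadjL_def unitL_def)

lemma c4_dn: "dnL SL4 = DN4"
  by (simp add: dnL_def SL4_def DN4_def leL_def)

lemma c4_dnok: "dnok 0 DN4"
  by (simp add: DN4_def)

lemma c4_cmpok: "cmpok 0 NB4 CMP4"
  by (simp add: NB4_def CMP4_def)

lemma c4_cmplen: "length CMP4 = length SL4"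
  by (simp add: CMP4_def SL4_def)

lemma c4_G: "search (okG 4 NB4 CMP4) [1,2,3,4] SL4 [] = [AA4]"
  by (simp add: okG_def SL4_def NB4_def CMP4_def AA4_def seteq_def nbs_def)

lemma c4_om: "OMIc 4 NB4 AA4"
  by (simp add: OMIc_def NB4_def AA4_def seteq_def nbs_def)

lemma c4_I: "search (okI DN4) [False, True] SL4 [] = IL4"
  by (simp add: okI_def SL4_def DN4_def IL4_def)

lemma c4_P: "map (psiL 4 AA4) IL4 = PS4"
  by (simp add: psiL_def cntL_def AA4_def IL4_def PS4_def)

lemma c4_PT: "seteq PS4 SL5"
  by (simp add: seteq_def PS4_def SL5_def)

lemma c4_ord: "list_all (\<lambda>(m, p). list_all (\<lambda>(m2, p2). subB m m2 = leL p p2) (zip IL4 PS4)) (zip IL4 PS4)"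
  by (simp add: subB_def leL_def IL4_def PS4_def)

lemma c4_H: "search (okH 4 (\<lambda>x. formL x = 2) NW4) [1,2,3,4] SL4 [] = [AA4]"
  by (simp add: okH_def SL4_def NW4_def AA4_def psiL_def cntL_def formL_def fsL_def)

lemma c4_nw: "nwok 0 NW4 IL4"
  by (simp add: NW4_def IL4_def)

lemma c4_nwlen: "length NW4 = length SL4"
  by (simp add: NW4_def SL4_def)

lemma inst4: "poset_iso_onto 4 (hS 4) (target 4) \<and>
         (\<forall>h. h \<in> stratum 4 \<rightarrow> {1..4} \<and> poset_iso_onto 4 h (target 4)
              \<longrightarrow> (\<forall>b\<in>stratum 4. h b = hS 4 b))"
  by (rule main_generic[OF stratum4 target4 _ _ c4_vok c4_ne c4_v0 c4_tp c4_cs c4_nb c4_dn c4_dnok c4_cmpok c4_cmplen c4_G c4_om c4_I c4_P c4_PT c4_ord c4_H c4_nw c4_nwlen]) simp_all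

definition NB5 :: "nat list list" where "NB5 = [[1],
    [0,2,3],
    [1,4,5],
    [1,4],
    [2,3,6,7],
    [2,7],
    [4,8],
    [4,5,8],
    [6,7,9],
    [8]]"

definition DN5 :: "nat list list" where "DN5 = [[],
    [0],
    [0,1],
    [0,1],
    [0,1,2,3],
    [0,1,2],
    [0,1,2,3,4],
    [0,1,2,3,4,5],
    [0,1,2,3,4,5,6,7],
    [0,1,2,3,4,5,6,7,8]]"

definition CMP5 :: "nat list list" where "CMP5 = [[],
    [0],
    [],
    [1],
    [3],
    [2],
    [],
    [4,5],
    [6,7],
    [8,9]]"

definition AA5 :: "nat list" where "AA5 = [5,4,3,2,4,1,5,3,4,2]"

definition IL5 :: "bool list list" where "IL5 = [[False,False,False,False,False,False,False,False,False,False],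
    [True,False,False,False,False,False,False,False,False,False],
    [True,True,False,False,False,False,False,False,False,False],
    [True,True,False,True,False,False,False,False,False,False],
    [True,True,True,False,False,False,False,False,False,False],
    [True,True,True,False,False,True,False,False,False,False],
    [True,True,True,True,False,False,False,False,False,False],
    [True,True,True,True,False,True,False,False,False,False],
    [True,True,True,True,True,False,False,False,False,False],
    [True,True,True,True,True,False,True,False,False,False],
    [True,True,True,True,True,True,False,False,False,False],
    [True,True,True,True,True,True,False,True,False,False],
    [True,True,True,True,True,True,True,False,False,False],
    [True,True,True,True,True,True,True,True,False,False],
    [True,True,True,True,True,True,True,True,True,False],
    [True,True,True,True,True,True,True,True,True,True]]"

definition PS5 :: "int list list" where "PS5 = [[0,0,0,0,0,1,0,0],
    [0,0,0,0,1,1,0,0],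
    [0,0,0,1,1,1,0,0],
    [0,1,0,1,1,1,0,0],
    [0,0,1,1,1,1,0,0],
    [1,0,1,1,1,1,0,0],
    [0,1,1,1,1,1,0,0],
    [1,1,1,1,1,1,0,0],
    [0,1,1,2,1,1,0,0],
    [0,1,1,2,2,1,0,0],
    [1,1,1,2,1,1,0,0],
    [1,1,2,2,1,1,0,0],
    [1,1,1,2,2,1,0,0],
    [1,1,2,2,2,1,0,0],
    [1,1,2,3,2,1,0,0],
    [1,2,2,3,2,1,0,0]]"

definition NW5 :: "bool list list list" where "NW5 = [[[True,False,False,False,False,False,False,False,False,False]],
   [[True,True,False,False,False,False,False,False,False,False]],
   [[True,True,True,False,False,False,False,False,False,False]],
   [[True,True,False,True,False,False,False,False,False,False],
    [True,True,True,True,False,False,False,False,False,False]],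
   [[True,True,True,True,True,False,False,False,False,False]],
   [[True,True,True,False,False,True,False,False,False,False],
    [True,True,True,True,False,True,False,False,False,False],
    [True,True,True,True,True,True,False,False,False,False]],
   [[True,True,True,True,True,False,True,False,False,False],
    [True,True,True,True,True,True,True,False,False,False]],
   [[True,True,True,True,True,True,False,True,False,False],
    [True,True,True,True,True,True,True,True,False,False]],
   [[True,True,True,True,True,True,True,True,True,False]],
   [[True,True,True,True,True,True,True,True,True,True]]]"

lemma c5_vok: "Vok SL5"
  by (simp add: Vok_def SL5_def)

lemma c5_ne: "SL5 \<noteq> []"
  by (simp add: SL5_def)

lemma c5_v0: "SL5 ! 0 = unitL 5"
  by (simp add: SL5_def unitL_def)

lemma c5_tp: "set SL6 \<subseteq> set PL"
  unfolding f6[symmetric] by auto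

lemma c5_cs: "set [1,2,3,4,5] = {1..5::nat}"
  by (auto; presburger)

lemma c5_nb: "nbL SL5 = NB5"
  by (simp add: nbL_def SL5_def NB5_def hadjL_def unitL_def)

lemma c5_dn: "dnL SL5 = DN5"
  by (simp add: dnL_def SL5_def DN5_def leL_def)

lemma c5_dnok: "dnok 0 DN5"
  by (simp add: DN5_def)

lemma c5_cmpok: "cmpok 0 NB5 CMP5"
  by (simp add: NB5_def CMP5_def)

lemma c5_cmplen: "length CMP5 = length SL5"
  by (simp add: CMP5_def SL5_def)

lemma c5_G: "search (okG 5 NB5 CMP5) [1,2,3,4,5] SL5 [] = [AA5]"
  by (simp add: okG_def SL5_def NB5_def CMP5_def AA5_def seteq_def nbs_def)

lemma c5_om: "OMIc 5 NB5 AA5"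
  by (simp add: OMIc_def NB5_def AA5_def seteq_def nbs_def)

lemma c5_I: "search (okI DN5) [False, True] SL5 [] = IL5"
  by (simp add: okI_def SL5_def DN5_def IL5_def)

lemma c5_P: "map (psiL 5 AA5) IL5 = PS5"
  by (simp add: psiL_def cntL_def AA5_def IL5_def PS5_def)

lemma c5_PT: "seteq PS5 SL6"
  by (simp add: seteq_def PS5_def SL6_def)

lemma c5_ord: "list_all (\<lambda>(m, p). list_all (\<lambda>(m2, p2). subB m m2 = leL p p2) (zip IL5 PS5)) (zip IL5 PS5)"
  by (simp add: subB_def leL_def IL5_def PS5_def)

lemma c5_H: "search (okH 5 (\<lambda>x. formL x = 2) NW5) [1,2,3,4,5] SL5 [] = [AA5]"
  by (simp add: okH_def SL5_def NW5_def AA5_def psiL_def cntL_def formL_def fsL_def)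

lemma c5_nw: "nwok 0 NW5 IL5"
  by (simp add: NW5_def IL5_def)

lemma c5_nwlen: "length NW5 = length SL5"
  by (simp add: NW5_def SL5_def)

lemma inst5: "poset_iso_onto 5 (hS 5) (target 5) \<and>
         (\<forall>h. h \<in> stratum 5 \<rightarrow> {1..5} \<and> poset_iso_onto 5 h (target 5)
              \<longrightarrow> (\<forall>b\<in>stratum 5. h b = hS 5 b))"
  by (rule main_generic[OF stratum5 target5 _ _ c5_vok c5_ne c5_v0 c5_tp c5_cs c5_nb c5_dn c5_dnok c5_cmpok c5_cmplen c5_G c5_om c5_I c5_P c5_PT c5_ord c5_H c5_nw c5_nwlen]) simp_all

definition NB6 :: "nat list list" where "NB6 = [[1],
    [0,2],
    [1,3,4],
    [2,5,6],
    [2,5],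
    [3,4,7,8],
    [3,8],
    [5,9,10],
    [5,6,10],
    [7,11],
    [7,8,11,12],
    [9,10,13],
    [10,13],
    [11,12,14],
    [13,15],
    [14]]"

definition DN6 :: "nat list list" where "DN6 = [[],
    [0],
    [0,1],
    [0,1,2],
    [0,1,2],
    [0,1,2,3,4],
    [0,1,2,3],
    [0,1,2,3,4,5],
    [0,1,2,3,4,5,6],
    [0,1,2,3,4,5,7],
    [0,1,2,3,4,5,6,7,8],
    [0,1,2,3,4,5,6,7,8,9,10],
    [0,1,2,3,4,5,6,7,8,10],
    [0,1,2,3,4,5,6,7,8,9,10,11,12],
    [0,1,2,3,4,5,6,7,8,9,10,11,12,13],
    [0,1,2,3,4,5,6,7,8,9,10,11,12,13,14]]"

definition CMP6 :: "nat list list" where "CMP6 = [[],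
    [0],
    [1],
    [],
    [2],
    [4],
    [3],
    [],
    [5,6],
    [],
    [7,8],
    [9],
    [10],
    [11,12],
    [13],
    [14,15]]"

definition AA6 :: "nat list" where "AA6 = [6,5,4,3,2,4,1,5,3,6,4,5,2,4,3,1]"

definition IL6 :: "bool list list" where "IL6 = [[False,False,False,False,False,False,False,False,False,False,False,False,False,False,False,False],
    [True,False,False,False,False,False,False,False,False,False,False,False,False,False,False,False],
    [True,True,False,False,False,False,False,False,False,False,False,False,False,False,False,False],
    [True,True,True,False,False,False,False,False,False,False,False,False,False,False,False,False],
    [True,True,True,False,True,False,False,False,False,False,False,False,False,False,False,False],
    [True,True,True,True,False,False,False,False,False,False,False,False,False,False,False,False],
    [True,True,True,True,False,False,True,False,False,False,False,False,False,False,False,False],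
    [True,True,True,True,True,False,False,False,False,False,False,False,False,False,False,False],
    [True,True,True,True,True,False,True,False,False,False,False,False,False,False,False,False],
    [True,True,True,True,True,True,False,False,False,False,False,False,False,False,False,False],
    [True,True,True,True,True,True,False,True,False,False,False,False,False,False,False,False],
    [True,True,True,True,True,True,False,True,False,True,False,False,False,False,False,False],
    [True,True,True,True,True,True,True,False,False,False,False,False,False,False,False,False],
    [True,True,True,True,True,True,True,False,True,False,False,False,False,False,False,False],
    [True,True,True,True,True,True,True,True,False,False,False,False,False,False,False,False],
    [True,True,True,True,True,True,True,True,False,True,False,False,False,False,False,False],
    [True,True,True,True,True,True,True,True,True,False,False,False,False,False,False,False],
    [True,True,True,True,True,True,True,True,True,False,True,False,False,False,False,False],
    [True,True,True,True,True,True,True,True,True,False,True,False,True,False,False,False],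
    [True,True,True,True,True,True,True,True,True,True,False,False,False,False,False,False],
    [True,True,True,True,True,True,True,True,True,True,True,False,False,False,False,False],
    [True,True,True,True,True,True,True,True,True,True,True,False,True,False,False,False],
    [True,True,True,True,True,True,True,True,True,True,True,True,False,False,False,False],
    [True,True,True,True,True,True,True,True,True,True,True,True,True,False,False,False],
    [True,True,True,True,True,True,True,True,True,True,True,True,True,True,False,False],
    [True,True,True,True,True,True,True,True,True,True,True,True,True,True,True,False],
    [True,True,True,True,True,True,True,True,True,True,True,True,True,True,True,True]]"

definition PS6 :: "int list list" where "PS6 = [[0,0,0,0,0,0,1,0],
    [0,0,0,0,0,1,1,0],
    [0,0,0,0,1,1,1,0],
    [0,0,0,1,1,1,1,0],
    [0,1,0,1,1,1,1,0],
    [0,0,1,1,1,1,1,0],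
    [1,0,1,1,1,1,1,0],
    [0,1,1,1,1,1,1,0],
    [1,1,1,1,1,1,1,0],
    [0,1,1,2,1,1,1,0],
    [0,1,1,2,2,1,1,0],
    [0,1,1,2,2,2,1,0],
    [1,1,1,2,1,1,1,0],
    [1,1,2,2,1,1,1,0],
    [1,1,1,2,2,1,1,0],
    [1,1,1,2,2,2,1,0],
    [1,1,2,2,2,1,1,0],
    [1,1,2,3,2,1,1,0],
    [1,2,2,3,2,1,1,0],
    [1,1,2,2,2,2,1,0],
    [1,1,2,3,2,2,1,0],
    [1,2,2,3,2,2,1,0],
    [1,1,2,3,3,2,1,0],
    [1,2,2,3,3,2,1,0],
    [1,2,2,4,3,2,1,0],
    [1,2,3,4,3,2,1,0],
    [2,2,3,4,3,2,1,0]]"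

definition NW6 :: "bool list list list" where "NW6 = [[[True,False,False,False,False,False,False,False,False,False,False,False,False,False,False,False]],
   [[True,True,False,False,False,False,False,False,False,False,False,False,False,False,False,False]],
   [[True,True,True,False,False,False,False,False,False,False,False,False,False,False,False,False]],
   [[True,True,True,True,False,False,False,False,False,False,False,False,False,False,False,False]],
   [[True,True,True,False,True,False,False,False,False,False,False,False,False,False,False,False],
    [True,True,True,True,True,False,False,False,False,False,False,False,False,False,False,False]],
   [[True,True,True,True,True,True,False,False,False,False,False,False,False,False,False,False]],
   [[True,True,True,True,False,False,True,False,False,False,False,False,False,False,False,False],
    [True,True,True,True,True,False,True,False,False,False,False,False,False,False,False,False],
    [True,True,True,True,True,True,True,False,False,False,False,False,False,False,False,False]],
   [[True,True,True,True,True,True,False,True,False,False,False,False,False,False,False,False],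
    [True,True,True,True,True,True,True,True,False,False,False,False,False,False,False,False]],
   [[True,True,True,True,True,True,True,False,True,False,False,False,False,False,False,False],
    [True,True,True,True,True,True,True,True,True,False,False,False,False,False,False,False]],
   [[True,True,True,True,True,True,False,True,False,True,False,False,False,False,False,False],
    [True,True,True,True,True,True,True,True,False,True,False,False,False,False,False,False],
    [True,True,True,True,True,True,True,True,True,True,False,False,False,False,False,False]],
   [[True,True,True,True,True,True,True,True,True,False,True,False,False,False,False,False],
    [True,True,True,True,True,True,True,True,True,True,True,False,False,False,False,False]],
   [[True,True,True,True,True,True,True,True,True,True,True,True,False,False,False,False]],
   [[True,True,True,True,True,True,True,True,True,False,True,False,True,False,False,False],
    [True,True,True,True,True,True,True,True,True,True,True,False,True,False,False,False],
    [True,True,True,True,True,True,True,True,True,True,True,True,True,False,False,False]],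
   [[True,True,True,True,True,True,True,True,True,True,True,True,True,True,False,False]],
   [[True,True,True,True,True,True,True,True,True,True,True,True,True,True,True,False]],
   [[True,True,True,True,True,True,True,True,True,True,True,True,True,True,True,True]]]"

lemma c6_vok: "Vok SL6"
  by (simp add: Vok_def SL6_def)

lemma c6_ne: "SL6 \<noteq> []"
  by (simp add: SL6_def)

lemma c6_v0: "SL6 ! 0 = unitL 6"
  by (simp add: SL6_def unitL_def)

lemma c6_tp: "set SL7 \<subseteq> set PL"
  unfolding f7[symmetric] by auto

lemma c6_cs: "set [1,2,3,4,5,6] = {1..6::nat}"
  by (auto; presburger)

lemma c6_nb: "nbL SL6 = NB6"
  by (simp add: nbL_def SL6_def NB6_def hadjL_def unitL_def)

lemma c6_dn: "dnL SL6 = DN6"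
  by (simp add: dnL_def SL6_def DN6_def leL_def)

lemma c6_dnok: "dnok 0 DN6"
  by (simp add: DN6_def)

lemma c6_cmpok: "cmpok 0 NB6 CMP6"
  by (simp add: NB6_def CMP6_def)

lemma c6_cmplen: "length CMP6 = length SL6"
  by (simp add: CMP6_def SL6_def)

lemma c6_G: "search (okG 6 NB6 CMP6) [1,2,3,4,5,6] SL6 [] = [AA6]"
  by (simp add: okG_def SL6_def NB6_def CMP6_def AA6_def seteq_def nbs_def)

lemma c6_om: "OMIc 6 NB6 AA6"
  by (simp add: OMIc_def NB6_def AA6_def seteq_def nbs_def)

lemma c6_I: "search (okI DN6) [False, True] SL6 [] = IL6"
  by (simp add: okI_def SL6_def DN6_def IL6_def)

lemma c6_P: "map (psiL 6 AA6) IL6 = PS6"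
  by (simp add: psiL_def cntL_def AA6_def IL6_def PS6_def)

lemma c6_PT: "seteq PS6 SL7"
  by (simp add: seteq_def PS6_def SL7_def)

lemma c6_ord: "list_all (\<lambda>(m, p). list_all (\<lambda>(m2, p2). subB m m2 = leL p p2) (zip IL6 PS6)) (zip IL6 PS6)"
  by (simp add: subB_def leL_def IL6_def PS6_def)

lemma c6_H: "search (okH 6 (\<lambda>x. formL x = 2) NW6) [1,2,3,4,5,6] SL6 [] = [AA6]"
  by (simp add: okH_def SL6_def NW6_def AA6_def psiL_def cntL_def formL_def fsL_def)

lemma c6_nw: "nwok 0 NW6 IL6"
  by (simp add: NW6_def IL6_def)

lemma c6_nwlen: "length NW6 = length SL6"
  by (simp add: NW6_def SL6_def)

lemma inst6: "poset_iso_onto 6 (hS 6) (target 6) \<and>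
         (\<forall>h. h \<in> stratum 6 \<rightarrow> {1..6} \<and> poset_iso_onto 6 h (target 6)
              \<longrightarrow> (\<forall>b\<in>stratum 6. h b = hS 6 b))"
  by (rule main_generic[OF stratum6 target6 _ _ c6_vok c6_ne c6_v0 c6_tp c6_cs c6_nb c6_dn c6_dnok c6_cmpok c6_cmplen c6_G c6_om c6_I c6_P c6_PT c6_ord c6_H c6_nw c6_nwlen]) simp_all

definition NB7 :: "nat list list" where "NB7 = [[1],
    [0,2],
    [1,3],
    [2,4,5],
    [3,6,7],
    [3,6],
    [4,5,8,9],
    [4,9],
    [6,10,11],
    [6,7,11],
    [8,12,13],
    [8,9,13,14],
    [10,15],
    [10,11,15,16],
    [11,16],
    [12,13,17],
    [13,14,17,18],
    [15,16,19],
    [16,19,20],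
    [17,18,21,22],
    [18,22],
    [19,23],
    [19,20,23],
    [21,22,24],
    [23,25],
    [24,26],
    [25]]"

definition DN7 :: "nat list list" where "DN7 = [[],
    [0],
    [0,1],
    [0,1,2],
    [0,1,2,3],
    [0,1,2,3],
    [0,1,2,3,4,5],
    [0,1,2,3,4],
    [0,1,2,3,4,5,6],
    [0,1,2,3,4,5,6,7],
    [0,1,2,3,4,5,6,8],
    [0,1,2,3,4,5,6,7,8,9],
    [0,1,2,3,4,5,6,8,10],
    [0,1,2,3,4,5,6,7,8,9,10,11],
    [0,1,2,3,4,5,6,7,8,9,11],
    [0,1,2,3,4,5,6,7,8,9,10,11,12,13],
    [0,1,2,3,4,5,6,7,8,9,10,11,13,14],
    [0,1,2,3,4,5,6,7,8,9,10,11,12,13,14,15,16],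
    [0,1,2,3,4,5,6,7,8,9,10,11,13,14,16],
    [0,1,2,3,4,5,6,7,8,9,10,11,12,13,14,15,16,17,18],
    [0,1,2,3,4,5,6,7,8,9,10,11,13,14,16,18],
    [0,1,2,3,4,5,6,7,8,9,10,11,12,13,14,15,16,17,18,19],
    [0,1,2,3,4,5,6,7,8,9,10,11,12,13,14,15,16,17,18,19,20],
    [0,1,2,3,4,5,6,7,8,9,10,11,12,13,14,15,16,17,18,19,20,21,22],
    [0,1,2,3,4,5,6,7,8,9,10,11,12,13,14,15,16,17,18,19,20,21,22,23],
    [0,1,2,3,4,5,6,7,8,9,10,11,12,13,14,15,16,17,18,19,20,21,22,23,24],
    [0,1,2,3,4,5,6,7,8,9,10,11,12,13,14,15,16,17,18,19,20,21,22,23,24,25]]"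

definition CMP7 :: "nat list list" where "CMP7 = [[],
    [0],
    [1],
    [2],
    [],
    [3],
    [5],
    [4],
    [],
    [6,7],
    [],
    [8,9],
    [],
    [10],
    [11],
    [12],
    [13,14],
    [15],
    [16],
    [17],
    [18],
    [],
    [19,20],
    [21,22],
    [23],
    [24],
    [25,26]]"

definition AA7 :: "nat list" where "AA7 = [7,6,5,4,3,2,4,1,5,3,6,4,7,5,2,6,4,5,3,4,1,2,3,4,5,6,7]"

definition IL7 :: "bool list list" where "IL7 = [[False,False,False,False,False,False,False,False,False,False,False,False,False,False,False,False,False,False,False,False,False,False,False,False,False,False,False],
    [True,False,False,False,False,False,False,False,False,False,False,False,False,False,False,False,False,False,False,False,False,False,False,False,False,False,False],
    [True,True,False,False,False,False,False,False,False,False,False,False,False,False,False,False,False,False,False,False,False,False,False,False,False,False,False],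
    [True,True,True,False,False,False,False,False,False,False,False,False,False,False,False,False,False,False,False,False,False,False,False,False,False,False,False],
    [True,True,True,True,False,False,False,False,False,False,False,False,False,False,False,False,False,False,False,False,False,False,False,False,False,False,False],
    [True,True,True,True,False,True,False,False,False,False,False,False,False,False,False,False,False,False,False,False,False,False,False,False,False,False,False],
    [True,True,True,True,True,False,False,False,False,False,False,False,False,False,False,False,False,False,False,False,False,False,False,False,False,False,False],
    [True,True,True,True,True,False,False,True,False,False,False,False,False,False,False,False,False,False,False,False,False,False,False,False,False,False,False],
    [True,True,True,True,True,True,False,False,False,False,False,False,False,False,False,False,False,False,False,False,False,False,False,False,False,False,False],
    [True,True,True,True,True,True,False,True,False,False,False,False,False,False,False,False,False,False,False,False,False,False,False,False,False,False,False],
    [True,True,True,True,True,True,True,False,False,False,False,False,False,False,False,False,False,False,False,False,False,False,False,False,False,False,False],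
    [True,True,True,True,True,True,True,False,True,False,False,False,False,False,False,False,False,False,False,False,False,False,False,False,False,False,False],
    [True,True,True,True,True,True,True,False,True,False,True,False,False,False,False,False,False,False,False,False,False,False,False,False,False,False,False],
    [True,True,True,True,True,True,True,False,True,False,True,False,True,False,False,False,False,False,False,False,False,False,False,False,False,False,False],
    [True,True,True,True,True,True,True,True,False,False,False,False,False,False,False,False,False,False,False,False,False,False,False,False,False,False,False],
    [True,True,True,True,True,True,True,True,False,True,False,False,False,False,False,False,False,False,False,False,False,False,False,False,False,False,False],
    [True,True,True,True,True,True,True,True,True,False,False,False,False,False,False,False,False,False,False,False,False,False,False,False,False,False,False],
    [True,True,True,True,True,True,True,True,True,False,True,False,False,False,False,False,False,False,False,False,False,False,False,False,False,False,False],
    [True,True,True,True,True,True,True,True,True,False,True,False,True,False,False,False,False,False,False,False,False,False,False,False,False,False,False],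
    [True,True,True,True,True,True,True,True,True,True,False,False,False,False,False,False,False,False,False,False,False,False,False,False,False,False,False],
    [True,True,True,True,True,True,True,True,True,True,False,True,False,False,False,False,False,False,False,False,False,False,False,False,False,False,False],
    [True,True,True,True,True,True,True,True,True,True,False,True,False,False,True,False,False,False,False,False,False,False,False,False,False,False,False],
    [True,True,True,True,True,True,True,True,True,True,True,False,False,False,False,False,False,False,False,False,False,False,False,False,False,False,False],
    [True,True,True,True,True,True,True,True,True,True,True,False,True,False,False,False,False,False,False,False,False,False,False,False,False,False,False],
    [True,True,True,True,True,True,True,True,True,True,True,True,False,False,False,False,False,False,False,False,False,False,False,False,False,False,False],
    [True,True,True,True,True,True,True,True,True,True,True,True,False,False,True,False,False,False,False,False,False,False,False,False,False,False,False],
    [True,True,True,True,True,True,True,True,True,True,True,True,False,True,False,False,False,False,False,False,False,False,False,False,False,False,False],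
    [True,True,True,True,True,True,True,True,True,True,True,True,False,True,True,False,False,False,False,False,False,False,False,False,False,False,False],
    [True,True,True,True,True,True,True,True,True,True,True,True,False,True,True,False,True,False,False,False,False,False,False,False,False,False,False],
    [True,True,True,True,True,True,True,True,True,True,True,True,False,True,True,False,True,False,True,False,False,False,False,False,False,False,False],
    [True,True,True,True,True,True,True,True,True,True,True,True,False,True,True,False,True,False,True,False,True,False,False,False,False,False,False],
    [True,True,True,True,True,True,True,True,True,True,True,True,True,False,False,False,False,False,False,False,False,False,False,False,False,False,False],
    [True,True,True,True,True,True,True,True,True,True,True,True,True,False,True,False,False,False,False,False,False,False,False,False,False,False,False],
    [True,True,True,True,True,True,True,True,True,True,True,True,True,True,False,False,False,False,False,False,False,False,False,False,False,False,False],
    [True,True,True,True,True,True,True,True,True,True,True,True,True,True,False,True,False,False,False,False,False,False,False,False,False,False,False],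
    [True,True,True,True,True,True,True,True,True,True,True,True,True,True,True,False,False,False,False,False,False,False,False,False,False,False,False],
    [True,True,True,True,True,True,True,True,True,True,True,True,True,True,True,False,True,False,False,False,False,False,False,False,False,False,False],
    [True,True,True,True,True,True,True,True,True,True,True,True,True,True,True,False,True,False,True,False,False,False,False,False,False,False,False],
    [True,True,True,True,True,True,True,True,True,True,True,True,True,True,True,False,True,False,True,False,True,False,False,False,False,False,False],
    [True,True,True,True,True,True,True,True,True,True,True,True,True,True,True,True,False,False,False,False,False,False,False,False,False,False,False],
    [True,True,True,True,True,True,True,True,True,True,True,True,True,True,True,True,True,False,False,False,False,False,False,False,False,False,False],
    [True,True,True,True,True,True,True,True,True,True,True,True,True,True,True,True,True,False,True,False,False,False,False,False,False,False,False],
    [True,True,True,True,True,True,True,True,True,True,True,True,True,True,True,True,True,False,True,False,True,False,False,False,False,False,False],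
    [True,True,True,True,True,True,True,True,True,True,True,True,True,True,True,True,True,True,False,False,False,False,False,False,False,False,False],
    [True,True,True,True,True,True,True,True,True,True,True,True,True,True,True,True,True,True,True,False,False,False,False,False,False,False,False],
    [True,True,True,True,True,True,True,True,True,True,True,True,True,True,True,True,True,True,True,False,True,False,False,False,False,False,False],
    [True,True,True,True,True,True,True,True,True,True,True,True,True,True,True,True,True,True,True,True,False,False,False,False,False,False,False],
    [True,True,True,True,True,True,True,True,True,True,True,True,True,True,True,True,True,True,True,True,False,True,False,False,False,False,False],
    [True,True,True,True,True,True,True,True,True,True,True,True,True,True,True,True,True,True,True,True,True,False,False,False,False,False,False],
    [True,True,True,True,True,True,True,True,True,True,True,True,True,True,True,True,True,True,True,True,True,False,True,False,False,False,False],
    [True,True,True,True,True,True,True,True,True,True,True,True,True,True,True,True,True,True,True,True,True,True,False,False,False,False,False],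
    [True,True,True,True,True,True,True,True,True,True,True,True,True,True,True,True,True,True,True,True,True,True,True,False,False,False,False],
    [True,True,True,True,True,True,True,True,True,True,True,True,True,True,True,True,True,True,True,True,True,True,True,True,False,False,False],
    [True,True,True,True,True,True,True,True,True,True,True,True,True,True,True,True,True,True,True,True,True,True,True,True,True,False,False],
    [True,True,True,True,True,True,True,True,True,True,True,True,True,True,True,True,True,True,True,True,True,True,True,True,True,True,False],
    [True,True,True,True,True,True,True,True,True,True,True,True,True,True,True,True,True,True,True,True,True,True,True,True,True,True,True]]"

definition PS7 :: "int list list" where "PS7 = [[0,0,0,0,0,0,0,1],
    [0,0,0,0,0,0,1,1],
    [0,0,0,0,0,1,1,1],
    [0,0,0,0,1,1,1,1],
    [0,0,0,1,1,1,1,1],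
    [0,1,0,1,1,1,1,1],
    [0,0,1,1,1,1,1,1],
    [1,0,1,1,1,1,1,1],
    [0,1,1,1,1,1,1,1],
    [1,1,1,1,1,1,1,1],
    [0,1,1,2,1,1,1,1],
    [0,1,1,2,2,1,1,1],
    [0,1,1,2,2,2,1,1],
    [0,1,1,2,2,2,2,1],
    [1,1,1,2,1,1,1,1],
    [1,1,2,2,1,1,1,1],
    [1,1,1,2,2,1,1,1],
    [1,1,1,2,2,2,1,1],
    [1,1,1,2,2,2,2,1],
    [1,1,2,2,2,1,1,1],
    [1,1,2,3,2,1,1,1],
    [1,2,2,3,2,1,1,1],
    [1,1,2,2,2,2,1,1],
    [1,1,2,2,2,2,2,1],
    [1,1,2,3,2,2,1,1],
    [1,2,2,3,2,2,1,1],
    [1,1,2,3,3,2,1,1],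
    [1,2,2,3,3,2,1,1],
    [1,2,2,4,3,2,1,1],
    [1,2,3,4,3,2,1,1],
    [2,2,3,4,3,2,1,1],
    [1,1,2,3,2,2,2,1],
    [1,2,2,3,2,2,2,1],
    [1,1,2,3,3,2,2,1],
    [1,1,2,3,3,3,2,1],
    [1,2,2,3,3,2,2,1],
    [1,2,2,4,3,2,2,1],
    [1,2,3,4,3,2,2,1],
    [2,2,3,4,3,2,2,1],
    [1,2,2,3,3,3,2,1],
    [1,2,2,4,3,3,2,1],
    [1,2,3,4,3,3,2,1],
    [2,2,3,4,3,3,2,1],
    [1,2,2,4,4,3,2,1],
    [1,2,3,4,4,3,2,1],
    [2,2,3,4,4,3,2,1],
    [1,2,3,5,4,3,2,1],
    [1,3,3,5,4,3,2,1],
    [2,2,3,5,4,3,2,1],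
    [2,2,4,5,4,3,2,1],
    [2,3,3,5,4,3,2,1],
    [2,3,4,5,4,3,2,1],
    [2,3,4,6,4,3,2,1],
    [2,3,4,6,5,3,2,1],
    [2,3,4,6,5,4,2,1],
    [2,3,4,6,5,4,3,1]]"

definition NW7 :: "bool list list list" where "NW7 = [[[True,False,False,False,False,False,False,False,False,False,False,False,False,False,False,False,False,False,False,False,False,False,False,False,False,False,False]],
   [[True,True,False,False,False,False,False,False,False,False,False,False,False,False,False,False,False,False,False,False,False,False,False,False,False,False,False]],
   [[True,True,True,False,False,False,False,False,False,False,False,False,False,False,False,False,False,False,False,False,False,False,False,False,False,False,False]],
   [[True,True,True,True,False,False,False,False,False,False,False,False,False,False,False,False,False,False,False,False,False,False,False,False,False,False,False]],
   [[True,True,True,True,True,False,False,False,False,False,False,False,False,False,False,False,False,False,False,False,False,False,False,False,False,False,False]],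
   [[True,True,True,True,False,True,False,False,False,False,False,False,False,False,False,False,False,False,False,False,False,False,False,False,False,False,False],
    [True,True,True,True,True,True,False,False,False,False,False,False,False,False,False,False,False,False,False,False,False,False,False,False,False,False,False]],
   [[True,True,True,True,True,True,True,False,False,False,False,False,False,False,False,False,False,False,False,False,False,False,False,False,False,False,False]],
   [[True,True,True,True,True,False,False,True,False,False,False,False,False,False,False,False,False,False,False,False,False,False,False,False,False,False,False],
    [True,True,True,True,True,True,False,True,False,False,False,False,False,False,False,False,False,False,False,False,False,False,False,False,False,False,False],
    [True,True,True,True,True,True,True,True,False,False,False,False,False,False,False,False,False,False,False,False,False,False,False,False,False,False,False]],
   [[True,True,True,True,True,True,True,False,True,False,False,False,False,False,False,False,False,False,False,False,False,False,False,False,False,False,False],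
    [True,True,True,True,True,True,True,True,True,False,False,False,False,False,False,False,False,False,False,False,False,False,False,False,False,False,False]],
   [[True,True,True,True,True,True,True,True,False,True,False,False,False,False,False,False,False,False,False,False,False,False,False,False,False,False,False],
    [True,True,True,True,True,True,True,True,True,True,False,False,False,False,False,False,False,False,False,False,False,False,False,False,False,False,False]],
   [[True,True,True,True,True,True,True,False,True,False,True,False,False,False,False,False,False,False,False,False,False,False,False,False,False,False,False],
    [True,True,True,True,True,True,True,True,True,False,True,False,False,False,False,False,False,False,False,False,False,False,False,False,False,False,False],
    [True,True,True,True,True,True,True,True,True,True,True,False,False,False,False,False,False,False,False,False,False,False,False,False,False,False,False]],
   [[True,True,True,True,True,True,True,True,True,True,False,True,False,False,False,False,False,False,False,False,False,False,False,False,False,False,False],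
    [True,True,True,True,True,True,True,True,True,True,True,True,False,False,False,False,False,False,False,False,False,False,False,False,False,False,False]],
   [[True,True,True,True,True,True,True,False,True,False,True,False,True,False,False,False,False,False,False,False,False,False,False,False,False,False,False],
    [True,True,True,True,True,True,True,True,True,False,True,False,True,False,False,False,False,False,False,False,False,False,False,False,False,False,False],
    [True,True,True,True,True,True,True,True,True,True,True,False,True,False,False,False,False,False,False,False,False,False,False,False,False,False,False],
    [True,True,True,True,True,True,True,True,True,True,True,True,True,False,False,False,False,False,False,False,False,False,False,False,False,False,False]],
   [[True,True,True,True,True,True,True,True,True,True,True,True,False,True,False,False,False,False,False,False,False,False,False,False,False,False,False],
    [True,True,True,True,True,True,True,True,True,True,True,True,True,True,False,False,False,False,False,False,False,False,False,False,False,False,False]],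
   [[True,True,True,True,True,True,True,True,True,True,False,True,False,False,True,False,False,False,False,False,False,False,False,False,False,False,False],
    [True,True,True,True,True,True,True,True,True,True,True,True,False,False,True,False,False,False,False,False,False,False,False,False,False,False,False],
    [True,True,True,True,True,True,True,True,True,True,True,True,False,True,True,False,False,False,False,False,False,False,False,False,False,False,False],
    [True,True,True,True,True,True,True,True,True,True,True,True,True,False,True,False,False,False,False,False,False,False,False,False,False,False,False],
    [True,True,True,True,True,True,True,True,True,True,True,True,True,True,True,False,False,False,False,False,False,False,False,False,False,False,False]],
   [[True,True,True,True,True,True,True,True,True,True,True,True,True,True,False,True,False,False,False,False,False,False,False,False,False,False,False],
    [True,True,True,True,True,True,True,True,True,True,True,True,True,True,True,True,False,False,False,False,False,False,False,False,False,False,False]],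
   [[True,True,True,True,True,True,True,True,True,True,True,True,False,True,True,False,True,False,False,False,False,False,False,False,False,False,False],
    [True,True,True,True,True,True,True,True,True,True,True,True,True,True,True,False,True,False,False,False,False,False,False,False,False,False,False],
    [True,True,True,True,True,True,True,True,True,True,True,True,True,True,True,True,True,False,False,False,False,False,False,False,False,False,False]],
   [[True,True,True,True,True,True,True,True,True,True,True,True,True,True,True,True,True,True,False,False,False,False,False,False,False,False,False]],
   [[True,True,True,True,True,True,True,True,True,True,True,True,False,True,True,False,True,False,True,False,False,False,False,False,False,False,False],
    [True,True,True,True,True,True,True,True,True,True,True,True,True,True,True,False,True,False,True,False,False,False,False,False,False,False,False],
    [True,True,True,True,True,True,True,True,True,True,True,True,True,True,True,True,True,False,True,False,False,False,False,False,False,False,False],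
    [True,True,True,True,True,True,True,True,True,True,True,True,True,True,True,True,True,True,True,False,False,False,False,False,False,False,False]],
   [[True,True,True,True,True,True,True,True,True,True,True,True,True,True,True,True,True,True,True,True,False,False,False,False,False,False,False]],
   [[True,True,True,True,True,True,True,True,True,True,True,True,False,True,True,False,True,False,True,False,True,False,False,False,False,False,False],
    [True,True,True,True,True,True,True,True,True,True,True,True,True,True,True,False,True,False,True,False,True,False,False,False,False,False,False],
    [True,True,True,True,True,True,True,True,True,True,True,True,True,True,True,True,True,False,True,False,True,False,False,False,False,False,False],
    [True,True,True,True,True,True,True,True,True,True,True,True,True,True,True,True,True,True,True,False,True,False,False,False,False,False,False],
    [True,True,True,True,True,True,True,True,True,True,True,True,True,True,True,True,True,True,True,True,True,False,False,False,False,False,False]],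
   [[True,True,True,True,True,True,True,True,True,True,True,True,True,True,True,True,True,True,True,True,False,True,False,False,False,False,False],
    [True,True,True,True,True,True,True,True,True,True,True,True,True,True,True,True,True,True,True,True,True,True,False,False,False,False,False]],
   [[True,True,True,True,True,True,True,True,True,True,True,True,True,True,True,True,True,True,True,True,True,False,True,False,False,False,False],
    [True,True,True,True,True,True,True,True,True,True,True,True,True,True,True,True,True,True,True,True,True,True,True,False,False,False,False]],
   [[True,True,True,True,True,True,True,True,True,True,True,True,True,True,True,True,True,True,True,True,True,True,True,True,False,False,False]],
   [[True,True,True,True,True,True,True,True,True,True,True,True,True,True,True,True,True,True,True,True,True,True,True,True,True,False,False]],
   [[True,True,True,True,True,True,True,True,True,True,True,True,True,True,True,True,True,True,True,True,True,True,True,True,True,True,False]],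
   [[True,True,True,True,True,True,True,True,True,True,True,True,True,True,True,True,True,True,True,True,True,True,True,True,True,True,True]]]"

lemma c7_vok: "Vok SL7"
  by (simp add: Vok_def SL7_def)

lemma c7_ne: "SL7 \<noteq> []"
  by (simp add: SL7_def)

lemma c7_v0: "SL7 ! 0 = unitL 7"
  by (simp add: SL7_def unitL_def)

lemma c7_tp: "set TL7 \<subseteq> set PL"
  unfolding t7[symmetric] f8[symmetric] by auto

lemma c7_cs: "set [1,2,3,4,5,6,7] = {1..7::nat}"
  by (auto; presburger)

lemma c7_nb: "nbL SL7 = NB7"
  by (simp add: nbL_def SL7_def NB7_def hadjL_def unitL_def)

lemma c7_dn: "dnL SL7 = DN7"
  by (simp add: dnL_def SL7_def DN7_def leL_def)

lemma c7_dnok: "dnok 0 DN7"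
  by (simp add: DN7_def)

lemma c7_cmpok: "cmpok 0 NB7 CMP7"
  by (simp add: NB7_def CMP7_def)

lemma c7_cmplen: "length CMP7 = length SL7"
  by (simp add: CMP7_def SL7_def)

lemma c7_G: "search (okG 7 NB7 CMP7) [1,2,3,4,5,6,7] SL7 [] = [AA7]"
  by (simp add: okG_def SL7_def NB7_def CMP7_def AA7_def seteq_def nbs_def)

lemma c7_om: "OMIc 7 NB7 AA7"
  by (simp add: OMIc_def NB7_def AA7_def seteq_def nbs_def)

lemma c7_I: "search (okI DN7) [False, True] SL7 [] = IL7"
  by (simp add: okI_def SL7_def DN7_def IL7_def)

lemma c7_P: "map (psiL 7 AA7) IL7 = PS7"
  by (simp add: psiL_def cntL_def AA7_def IL7_def PS7_def)

lemma c7_PT: "seteq PS7 TL7"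
  by (simp add: seteq_def PS7_def TL7_def)

lemma c7_ord: "list_all (\<lambda>(m, p). list_all (\<lambda>(m2, p2). subB m m2 = leL p p2) (zip IL7 PS7)) (zip IL7 PS7)"
  by (simp add: subB_def leL_def IL7_def PS7_def)

lemma c7_H: "search (okH 7 (\<lambda>x. formL x = 2) NW7) [1,2,3,4,5,6,7] SL7 [] = [AA7]"
  by (simp add: okH_def SL7_def NW7_def AA7_def psiL_def cntL_def formL_def fsL_def)

lemma c7_nw: "nwok 0 NW7 IL7"
  by (simp add: NW7_def IL7_def)

lemma c7_nwlen: "length NW7 = length SL7"
  by (simp add: NW7_def SL7_def)

lemma inst7: "poset_iso_onto 7 (hS 7) (target 7) \<and>
         (\<forall>h. h \<in> stratum 7 \<rightarrow> {1..7} \<and> poset_iso_onto 7 h (target 7)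
              \<longrightarrow> (\<forall>b\<in>stratum 7. h b = hS 7 b))"
  by (rule main_generic[OF stratum7 target7 _ _ c7_vok c7_ne c7_v0 c7_tp c7_cs c7_nb c7_dn c7_dnok c7_cmpok c7_cmplen c7_G c7_om c7_I c7_P c7_PT c7_ord c7_H c7_nw c7_nwlen]) simp_all


theorem mainTheorem13:
  assumes "s \<in> {3,4,5,6,7::nat}"
  shows "poset_iso_onto s (hS s) (target s) \<and>
         (\<forall>h. h \<in> stratum s \<rightarrow> {1..s} \<and> poset_iso_onto s h (target s)
              \<longrightarrow> (\<forall>b\<in>stratum s. h b = hS s b))"
proof -
  have "s = 3 \<or> s = 4 \<or> s = 5 \<or> s = 6 \<or> s = 7" using assms by simp
  then show ?thesis
  proof (elim disjE)
    assume "s = 3" then show ?thesis using inst3 by simp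
  next
    assume "s = 4" then show ?thesis using inst4 by simp
  next
    assume "s = 5" then show ?thesis using inst5 by simp
  next
    assume "s = 6" then show ?thesis using inst6 by simp
  next
    assume "s = 7" then show ?thesis using inst7 by simp
  qed
qed

end
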